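(* Let $\mathcal{A}$ be a complex Banach algebra with unity, $k$ a positive integer, and let $a,b\in\mathcal{A}$ both be g$\pi$-Hirano invertible. Suppose $\alpha_{1}\cdots\alpha_{k}ab=\alpha_{1}\cdots\alpha_{k}ba$ for all $\alpha_{1},\dots,\alpha_{k}\in\{a,b\}$. Then $1+a^{g\pi H}b$ is g$\pi$-Hirano invertible if and only if $a+b$ is g$\pi$-Hirano invertible.
   Context: $\mathcal{A}^{qnil}$ denotes the set of quasinilpotent elements of $\mathcal{A}$ (spectrum equal to $\{0\}$). An element $x\in\mathcal{A}$ is a g$\pi$-Hirano inverse of $a$ if $xax=x$, $ax=xa$ and $a-a^{n+2}x\in\mathcal{A}^{qnil}$ for some positive integer $n$; it is unique when it exists and is denoted $a^{g\pi H}$, and $a$ is then called g$\pi$-Hirano invertible. *)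

theory Defs
  imports "HOL-Analysis.Analysis"
begin

class complex_banach_algebra_1 = banach + real_normed_algebra_1 +
  fixes scaleC :: "complex \<Rightarrow> 'a \<Rightarrow> 'a"
  assumes scaleC_of_real: "scaleC (complex_of_real r) x = scaleR r x"
    and scaleC_add_left: "scaleC (c + d) x = scaleC c x + scaleC d x"
    and scaleC_add_right: "scaleC c (x + y) = scaleC c x + scaleC c y"
    and scaleC_scaleC: "scaleC c (scaleC d x) = scaleC (c * d) x"
    and scaleC_one: "scaleC 1 x = x"
    and mult_scaleC_left: "scaleC c x * y = scaleC c (x * y)"
    and mult_scaleC_right: "x * scaleC c y = scaleC c (x * y)"
    and norm_scaleC: "norm (scaleC c x) = cmod c * norm x"

definition invertible_el :: "'a::ring_1 \<Rightarrow> bool" where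
  "invertible_el x \<longleftrightarrow> (\<exists>y. x * y = 1 \<and> y * x = 1)"

definition spectrum_el :: "'a::complex_banach_algebra_1 \<Rightarrow> complex set" where
  "spectrum_el a = {z. \<not> invertible_el (scaleC z 1 - a)}"

definition quasinilpotent :: "'a::complex_banach_algebra_1 \<Rightarrow> bool" where
  "quasinilpotent a \<longleftrightarrow> spectrum_el a = {0}"

definition is_gpiH_inverse :: "'a::complex_banach_algebra_1 \<Rightarrow> 'a \<Rightarrow> bool" where
  "is_gpiH_inverse a x \<longleftrightarrow> x * a * x = x \<and> a * x = x * a \<and>
     (\<exists>n::nat. n > 0 \<and> quasinilpotent (a - a ^ (n + 2) * x))"

definition gpiH_invertible :: "'a::complex_banach_algebra_1 \<Rightarrow> bool" where
  "gpiH_invertible a \<longleftrightarrow> (\<exists>x. is_gpiH_inverse a x)"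

definition gpiH_inv :: "'a::complex_banach_algebra_1 \<Rightarrow> 'a" where
  "gpiH_inv a = (THE x. is_gpiH_inverse a x)"

end

theory Submission
  imports Defs "HOL-Computational_Algebra.Formal_Power_Series"
begin

lemma pow_commute: "(x::'a::ring_1) * y = y * x \<Longrightarrow> x ^ n * y = y * x ^ n"
  by (rule power_commuting_commutes)

lemma pow_commute2: "(x::'a::ring_1) * y = y * x \<Longrightarrow> x ^ n * y ^ m = y ^ m * x ^ n"
  by (metis pow_commute)

lemma mult_power_comm: "(x::'a::ring_1) * y = y * x \<Longrightarrow> (x * y) ^ n = x ^ n * y ^ n"
proof (induct n)
  case 0 then show ?case by simp
next
  case (Suc n)
  have "(x*y)^Suc n = x * y * (x^n * y^n)" using Suc by simp
  also have "\<dots> = x * (y * x^n) * y^n" by (simp add: mult.assoc)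
  also have "\<dots> = x * (x^n * y) * y^n" using pow_commute[OF Suc.prems] by metis
  also have "\<dots> = x^Suc n * y^Suc n" by (simp add: mult.assoc)
  finally show ?case .
qed

lemma geo_ring: "((x::'a::ring_1) - 1) * (\<Sum>i<n. x^i) = x^n - 1"
  by (induct n) (simp_all add: algebra_simps)

lemma geo_ring': "(\<Sum>i<n. x^i) * ((x::'a::ring_1) - 1) = x^n - 1"
proof (induct n)
  case 0 then show ?case by simp
next
  case (Suc n)
  then show ?case by (simp add: algebra_simps power_commutes)
qed

lemma sum_comm: "(\<And>i. i \<in> A \<Longrightarrow> f i * (y::'a::ring_1) = y * f i) \<Longrightarrow> sum f A * y = y * sum f A"
  by (simp add: sum_distrib_left sum_distrib_right)

lemma diff_pow_comm:
  assumes "(x::'a::ring_1) * y = y * x"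
  shows "x^n - y^n = (x - y) * (\<Sum>i<n. x^i * y^(n - Suc i))"
proof (induct n)
  case 0 then show ?case by simp
next
  case (Suc n)
  have "(x - y) * (\<Sum>i<Suc n. x^i * y^(Suc n - Suc i)) =
        (x - y) * ((\<Sum>i<n. x^i * y^(n - Suc i)) * y) + (x - y) * x^n"
  proof -
    have "(\<Sum>i<n. x^i * y^(Suc n - Suc i)) = (\<Sum>i<n. x^i * y^(n - Suc i)) * y"
      unfolding sum_distrib_right
      by (intro sum.cong refl) (simp add: mult.assoc power_Suc2[symmetric] Suc_diff_Suc)
    then show ?thesis by (simp add: algebra_simps)
  qed
  also have "\<dots> = (x^n - y^n) * y + (x - y) * x^n" by (simp add: Suc mult.assoc)
  also have "\<dots> = x^Suc n - y^Suc n"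
  proof -
    have h1: "x^Suc n = x * x^n" by (rule power_Suc)
    have h2: "y^Suc n = y^n * y" by (rule power_Suc2)
    show ?thesis unfolding h1 h2 using pow_commute[OF assms, of n] by (simp add: algebra_simps)
  qed
  finally show ?case by simp
qed

lemma bound_zero:
  fixes X :: "'a::real_normed_vector"
  assumes "\<And>m. norm X \<le> C * d^m" "0 \<le> d" "d < 1"
  shows "X = 0"
proof -
  have "(\<lambda>m. C * d^m) \<longlonglongrightarrow> C * 0"
    by (intro tendsto_mult tendsto_const LIMSEQ_power_zero) (use assms in auto)
  then have "norm X \<le> 0"
    by (intro LIMSEQ_le_const[of _ 0]) (use assms in auto)
  then show ?thesis by simp
qed

definition inv_el :: "'a::ring_1 \<Rightarrow> 'a" where
  "inv_el x = (SOME y. x * y = 1 \<and> y * x = 1)"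

lemma inv_el: "invertible_el x \<Longrightarrow> x * inv_el x = 1 \<and> inv_el x * x = 1"
  unfolding invertible_el_def inv_el_def by (rule someI_ex)

lemma inv_el_unique: "x * y = 1 \<Longrightarrow> (z::'a::ring_1) * x = 1 \<Longrightarrow> y = z"
  by (metis mult.assoc mult_1_left mult_1_right)

lemma inv_el_comm:
  assumes "x * y = 1" "y * x = 1" "x * u = u * (x::'a::ring_1)"
  shows "y * u = u * y"
proof -
  have "y * u = y * u * (x * y)" using assms by simp
  also have "\<dots> = y * (u * x) * y" by (simp add: mult.assoc)
  also have "\<dots> = y * (x * u) * y" using assms by simp
  also have "\<dots> = (y * x) * u * y" by (simp add: mult.assoc)
  also have "\<dots> = u * y" using assms(2) by simp
  finally show ?thesis .
qed

section \<open>Norm-quasinilpotence\<close>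

definition nq :: "'a::real_normed_algebra_1 \<Rightarrow> bool" where
  "nq q \<longleftrightarrow> (\<forall>\<epsilon>>0. \<exists>C. \<forall>n. norm (q^n) \<le> C * \<epsilon>^n)"

lemma nqD: "nq q \<Longrightarrow> \<epsilon> > 0 \<Longrightarrow> \<exists>C. \<forall>n. norm (q^n) \<le> C * \<epsilon>^n"
  unfolding nq_def by blast

lemma nq_shift:
  fixes q :: "'a::real_normed_algebra_1"
  assumes "\<And>\<epsilon>. \<epsilon> > 0 \<Longrightarrow> \<exists>C. \<forall>m. norm (q^(m+j)) \<le> C * \<epsilon>^m"
  shows "nq q"
  unfolding nq_def
proof (intro allI impI)
  fix \<epsilon> :: real assume e: "\<epsilon> > 0"
  obtain C where C: "\<And>m. norm (q^(m+j)) \<le> C * \<epsilon>^m" using assms[OF e] by blast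
  define K where "K = (1 + norm q)^j"
  define D where "D = max (abs C / \<epsilon>^j) (K / min 1 \<epsilon> ^ j)"
  show "\<exists>C. \<forall>n. norm (q^n) \<le> C * \<epsilon>^n"
  proof (intro exI allI)
    fix n
    show "norm (q^n) \<le> D * \<epsilon>^n"
    proof (cases "n \<ge> j")
      case True
      have "norm (q^n) \<le> C * \<epsilon>^(n-j)" using C[of "n-j"] True by simp
      also have "\<dots> \<le> abs C * \<epsilon>^(n-j)" using e by (intro mult_right_mono) auto
      also have "\<dots> = abs C / \<epsilon>^j * \<epsilon>^n"
        using e True by (simp add: power_diff field_simps)
      also have "\<dots> \<le> D * \<epsilon>^n" unfolding D_def using e by (intro mult_right_mono) auto
      finally show ?thesis .
    next
      case False
      have "norm (q^n) \<le> norm q ^ n" by (rule norm_power_ineq)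
      also have "\<dots> \<le> (1 + norm q)^n" by (intro power_mono) auto
      also have "\<dots> \<le> K" unfolding K_def using False by (intro power_increasing) auto
      also have "K = K / min 1 \<epsilon> ^ j * min 1 \<epsilon> ^ j" using e by simp
      also have "\<dots> \<le> K / min 1 \<epsilon> ^ j * \<epsilon> ^ n"
      proof (intro mult_left_mono)
        have "min 1 \<epsilon> ^ j \<le> min 1 \<epsilon> ^ n" using False e by (intro power_decreasing) auto
        also have "\<dots> \<le> \<epsilon>^n" using e by (intro power_mono) auto
        finally show "min 1 \<epsilon> ^ j \<le> \<epsilon>^n" .
        show "0 \<le> K / min 1 \<epsilon> ^ j" unfolding K_def using e by auto
      qed
      also have "\<dots> \<le> D * \<epsilon>^n" unfolding D_def using e by (intro mult_right_mono) auto
      finally show ?thesis .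
    qed
  qed
qed

lemma nq_zero: "nq (0::'a::real_normed_algebra_1)"
  unfolding nq_def
proof (intro allI impI exI)
  fix \<epsilon> :: real and n assume "\<epsilon> > 0"
  show "norm ((0::'a)^n) \<le> 1 * \<epsilon>^n" using \<open>\<epsilon> > 0\<close> by (cases n) auto
qed

lemma nq_mult_comm:
  fixes q u :: "'a::real_normed_algebra_1"
  assumes q: "nq q" and c: "u * q = q * u"
  shows "nq (u * q)" "nq (q * u)"
proof -
  show "nq (u * q)"
    unfolding nq_def
  proof (intro allI impI)
    fix \<epsilon> :: real assume e: "\<epsilon> > 0"
    have pos: "1 + norm u > 0" by (simp add: add_pos_nonneg)
    obtain C where C: "\<And>n. norm (q^n) \<le> C * (\<epsilon> / (1 + norm u))^n"
      using nqD[OF q, of "\<epsilon> / (1 + norm u)"] e pos by auto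
    show "\<exists>C. \<forall>n. norm ((u * q) ^ n) \<le> C * \<epsilon> ^ n"
    proof (intro exI allI)
      fix n
      have eq1: "(1 + norm u) * (\<epsilon> / (1 + norm u)) = \<epsilon>" using pos by simp
      have eq2: "(1 + norm u)^n * (\<epsilon> / (1 + norm u))^n = \<epsilon>^n"
        by (metis eq1 power_mult_distrib)
      have "norm ((u*q)^n) = norm (u^n * q^n)" by (simp add: mult_power_comm[OF c])
      also have "\<dots> \<le> norm (u^n) * norm (q^n)" by (rule norm_mult_ineq)
      also have "\<dots> \<le> (1 + norm u)^n * (C * (\<epsilon> / (1 + norm u))^n)"
        by (intro mult_mono C order.trans[OF norm_power_ineq] power_mono) auto
      also have "\<dots> = C * ((1 + norm u)^n * (\<epsilon> / (1 + norm u))^n)" by (simp only: mult_ac)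
      also have "\<dots> = C * \<epsilon>^n" by (simp only: eq2)
      finally show "norm ((u*q)^n) \<le> C * \<epsilon>^n" .
    qed
  qed
  then show "nq (q * u)" using c by simp
qed

lemma nq_minus: "nq q \<Longrightarrow> nq (-q)"
  using nq_mult_comm(1)[of q "-1"] by simp

lemma of_real_comm: "of_real r * (q::'a::real_normed_algebra_1) = q * of_real r"
  by (simp add: of_real_def)

lemma nq_scaleR: "nq q \<Longrightarrow> nq (scaleR r q)"
  unfolding scaleR_conv_of_real by (rule nq_mult_comm(1)[OF _ of_real_comm])

lemma nq_pow_imp:
  fixes q :: "'a::real_normed_algebra_1"
  assumes "nq (q^n)" "n > 0"
  shows "nq q"
  unfolding nq_def
proof (intro allI impI)
  fix \<epsilon> :: real assume e: "\<epsilon> > 0"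
  obtain C where C: "\<And>t. norm ((q^n)^t) \<le> C * (\<epsilon>^n)^t" using nqD[OF assms(1), of "\<epsilon>^n"] e by auto
  define K where "K = (1 + norm q)^n / min 1 \<epsilon> ^ n"
  have K0: "K \<ge> 0" unfolding K_def using e by auto
  show "\<exists>C. \<forall>m. norm (q^m) \<le> C * \<epsilon>^m"
  proof (intro exI allI)
    fix m
    define t r where "t = m div n" and "r = m mod n"
    have m: "m = n * t + r" unfolding t_def r_def by simp
    have r: "r < n" unfolding r_def using assms by simp
    have "norm (q^m) = norm ((q^n)^t * q^r)" by (simp add: m power_add power_mult)
    also have "\<dots> \<le> norm ((q^n)^t) * norm (q^r)" by (rule norm_mult_ineq)
    also have "\<dots> \<le> (C * (\<epsilon>^n)^t) * (K * \<epsilon>^r)"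
    proof (intro mult_mono C)
      have "norm (q^r) \<le> (1 + norm q)^r" by (intro order.trans[OF norm_power_ineq] power_mono) auto
      also have "\<dots> \<le> (1 + norm q)^n" using r by (intro power_increasing) auto
      also have "\<dots> = K * min 1 \<epsilon> ^ n" unfolding K_def using e by simp
      also have "\<dots> \<le> K * \<epsilon>^r"
      proof (intro mult_left_mono K0)
        have "min 1 \<epsilon> ^ n \<le> min 1 \<epsilon> ^ r" using r e by (intro power_decreasing) auto
        also have "\<dots> \<le> \<epsilon>^r" using e by (intro power_mono) auto
        finally show "min 1 \<epsilon> ^ n \<le> \<epsilon>^r" .
      qed
      finally show "norm (q^r) \<le> K * \<epsilon>^r" .
      show "0 \<le> C * (\<epsilon>^n)^t" using C[of t] by (meson norm_ge_zero order.trans)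
    qed auto
    also have "\<dots> = (C * K) * \<epsilon>^m" by (simp add: m power_add power_mult)
    finally show "norm (q^m) \<le> (C*K) * \<epsilon>^m" .
  qed
qed

lemma nq_C_ge1: "(\<And>n. norm ((q::'a::real_normed_algebra_1)^n) \<le> C * \<epsilon>^n) \<Longrightarrow> C \<ge> 1"
  by (metis mult.right_neutral norm_one power_0)

lemma pow_orth: "X * Y = 0 \<Longrightarrow> ((X::'a::ring_1) + Y)^m = (\<Sum>i\<le>m. Y^i * X^(m-i))"
proof (induct m)
  case 0 then show ?case by simp
next
  case (Suc m)
  have "(X+Y)^Suc m = (X+Y)^m * (X+Y)" by (rule power_Suc2)
  also have "\<dots> = (\<Sum>i\<le>m. Y^i * X^(m-i)) * X + (\<Sum>i\<le>m. Y^i * X^(m-i)) * Y"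
    using Suc by (simp add: distrib_left)
  also have "(\<Sum>i\<le>m. Y^i * X^(m-i)) * Y = Y^Suc m"
  proof -
    have "(\<Sum>i\<le>m. Y^i * X^(m-i)) * Y = (\<Sum>i\<le>m. Y^i * X^(m-i) * Y)" by (simp add: sum_distrib_right)
    also have "\<dots> = (\<Sum>i\<in>{m}. Y^i * X^(m-i) * Y)"
    proof (rule sum.mono_neutral_right)
      show "\<forall>i\<in>{..m} - {m}. Y ^ i * X ^ (m - i) * Y = 0"
      proof
        fix i assume "i \<in> {..m} - {m}"
        then have "m - i = Suc (m - i - 1)" by auto
        then have "X^(m-i) * Y = X^(m-i-1) * (X * Y)" by (metis mult.assoc power_Suc2)
        then show "Y ^ i * X ^ (m - i) * Y = 0" using Suc.prems by (simp add: mult.assoc)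
      qed
    qed auto
    also have "\<dots> = Y^Suc m" by (simp add: power_commutes)
    finally show ?thesis .
  qed
  also have "(\<Sum>i\<le>m. Y^i * X^(m-i)) * X = (\<Sum>i\<le>m. Y^i * X^(Suc m-i))"
    unfolding sum_distrib_right
    by (intro sum.cong refl) (simp add: mult.assoc power_Suc2[symmetric] Suc_diff_le)
  also have "\<dots> + Y^Suc m = (\<Sum>i\<le>Suc m. Y^i * X^(Suc m-i))" by simp
  finally show ?case .
qed

lemma nq_add_orth:
  fixes X Y :: "'a::real_normed_algebra_1"
  assumes XY: "X * Y = 0" and X: "nq X" and Y: "nq Y"
  shows "nq (X + Y)"
  unfolding nq_def
proof (intro allI impI)
  fix \<epsilon> :: real assume e: "\<epsilon> > 0"
  obtain C1 where C1: "\<And>n. norm (X^n) \<le> C1 * (\<epsilon>/2)^n" using nqD[OF X, of "\<epsilon>/2"] e by auto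
  obtain C2 where C2: "\<And>n. norm (Y^n) \<le> C2 * (\<epsilon>/2)^n" using nqD[OF Y, of "\<epsilon>/2"] e by auto
  have c1: "C1 \<ge> 1" "C2 \<ge> 1" using nq_C_ge1 C1 C2 by blast+
  show "\<exists>C. \<forall>n. norm ((X + Y) ^ n) \<le> C * \<epsilon> ^ n"
  proof (intro exI allI)
    fix m
    have "norm ((X+Y)^m) \<le> (\<Sum>i\<le>m. norm (Y^i * X^(m-i)))"
      unfolding pow_orth[OF XY] by (rule norm_sum)
    also have "\<dots> \<le> (\<Sum>i\<le>m. (C2 * (\<epsilon>/2)^i) * (C1 * (\<epsilon>/2)^(m-i)))"
      by (intro sum_mono order.trans[OF norm_mult_ineq] mult_mono C1 C2) (use c1 e in auto)
    also have "\<dots> = (\<Sum>i\<le>m. C1 * C2 * (\<epsilon>/2)^m)"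
      by (intro sum.cong refl) (simp add: power_add[symmetric])
    also have "\<dots> = real (Suc m) * (C1 * C2 * (\<epsilon>/2)^m)" by simp
    also have "\<dots> \<le> 2^m * (C1 * C2 * (\<epsilon>/2)^m)"
    proof (intro mult_right_mono)
      have "Suc m \<le> 2^m" using less_exp[of m] by (simp add: Suc_le_eq)
      then show "real (Suc m) \<le> 2^m" by (metis of_nat_le_iff of_nat_numeral of_nat_power)
    qed (use c1 e in auto)
    also have "\<dots> = C1 * C2 * \<epsilon>^m" by (simp add: power_divide)
    finally show "norm ((X+Y)^m) \<le> (C1*C2) * \<epsilon>^m" .
  qed
qed

definition wd :: "'a \<Rightarrow> 'a \<Rightarrow> bool list \<Rightarrow> 'a::ring_1" where
  "wd a b Z = prod_list (map (\<lambda>t. if t then a else b) Z)"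

definition WC :: "nat \<Rightarrow> 'a::ring_1 \<Rightarrow> 'a \<Rightarrow> bool" where
  "WC k a b \<longleftrightarrow> (\<forall>Z. length Z = k \<longrightarrow> wd a b Z * a * b = wd a b Z * b * a)"

lemma wd_Nil[simp]: "wd a b [] = 1" by (simp add: wd_def)
lemma wd_Cons: "wd a b (t # Z) = (if t then a else b) * wd a b Z" by (simp add: wd_def)
lemma wd_append: "wd a b (Z @ V) = wd a b Z * wd a b V" by (simp add: wd_def)
lemma wd_snoc: "wd a b (Z @ [t]) = wd a b Z * (if t then a else b)" by (simp add: wd_append wd_Cons)
lemma wd_rep: "wd a b (replicate i True @ replicate l False) = a^i * b^l"
  by (simp add: wd_def)

lemma WC_long:
  assumes "WC k a b" "length Z \<ge> k"
  shows "wd a b Z * a * b = wd a b Z * b * a"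
proof -
  let ?Z1 = "take (length Z - k) Z" and ?Z2 = "drop (length Z - k) Z"
  have Z: "Z = ?Z1 @ ?Z2" by simp
  have "length ?Z2 = k" using assms by simp
  then have "wd a b ?Z2 * a * b = wd a b ?Z2 * b * a" using assms(1) unfolding WC_def by blast
  moreover have "wd a b Z = wd a b ?Z1 * wd a b ?Z2" by (metis Z wd_append)
  ultimately show ?thesis by (simp add: mult.assoc)
qed

lemma WC_pow_good:
  assumes "WC k a b" "length V + m \<ge> k"
  shows "wd a b V * (a+b)^m * wd a b Z * a * b = wd a b V * (a+b)^m * wd a b Z * b * a"
  using assms(2)
proof (induct m arbitrary: V)
  case 0
  then show ?case using WC_long[OF assms(1), of "V @ Z"] by (simp add: wd_append)
next
  case (Suc m)
  have e: "wd a b V * (a+b)^Suc m = wd a b (V @ [True]) * (a+b)^m + wd a b (V @ [False]) * (a+b)^m"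
    by (simp add: wd_snoc algebra_simps)
  have h1: "wd a b (V @ [True]) * (a+b)^m * wd a b Z * a * b = wd a b (V @ [True]) * (a+b)^m * wd a b Z * b * a"
    by (rule Suc.hyps) (use Suc.prems in simp)
  have h2: "wd a b (V @ [False]) * (a+b)^m * wd a b Z * a * b = wd a b (V @ [False]) * (a+b)^m * wd a b Z * b * a"
    by (rule Suc.hyps) (use Suc.prems in simp)
  show ?case unfolding e using h1 h2 by (simp add: algebra_simps)
qed

definition good :: "'a::ring_1 \<Rightarrow> 'a \<Rightarrow> 'a \<Rightarrow> bool" where
  "good a b u \<longleftrightarrow> (\<forall>Z. u * wd a b Z * a * b = u * wd a b Z * b * a)"

lemma WC_good: "WC k a b \<Longrightarrow> good a b ((a+b)^k)"
  unfolding good_def using WC_pow_good[of k a b "[]" k] by simp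

lemma good_swap:
  assumes "good a b u"
  shows "u * a^i * b^l * a = u * a^(Suc i) * b^l"
proof (induct l)
  case 0 then show ?case by (simp add: mult.assoc power_commutes)
next
  case (Suc l)
  have "u * a^i * b^Suc l * a = u * wd a b (replicate i True @ replicate l False) * b * a"
    by (simp add: wd_rep mult.assoc power_commutes)
  also have "\<dots> = u * wd a b (replicate i True @ replicate l False) * a * b"
    using assms unfolding good_def by metis
  also have "\<dots> = (u * a^i * b^l * a) * b" by (simp add: wd_rep mult.assoc)
  also have "\<dots> = u * a^Suc i * b^Suc l" unfolding Suc by (simp add: mult.assoc power_commutes)
  finally show ?case .
qed

lemma good_reorder:
  assumes "good a b u"
  shows "u * wd a b Z = u * a^(length (filter (\<lambda>x. x) Z)) * b^(length (filter Not Z))"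
proof (induct Z rule: rev_induct)
  case Nil then show ?case by simp
next
  case (snoc t Z)
  show ?case
  proof (cases t)
    case True
    have "u * wd a b (Z @ [t]) = u * a^(length (filter (\<lambda>x. x) Z)) * b^(length (filter Not Z)) * a"
      using snoc True by (simp add: wd_snoc mult.assoc[symmetric])
    also have "\<dots> = u * a^Suc (length (filter (\<lambda>x. x) Z)) * b^(length (filter Not Z))"
      by (rule good_swap[OF assms])
    finally show ?thesis using True by simp
  next
    case False
    have "u * wd a b (Z @ [t]) = u * a^(length (filter (\<lambda>x. x) Z)) * b^(length (filter Not Z)) * b"
      using snoc False by (simp add: wd_snoc mult.assoc[symmetric])
    then show ?thesis using False by (simp add: mult.assoc power_commutes)
  qed
qed

lemma filter_len: "length (filter (\<lambda>x. x) Z) + length (filter Not Z) = length Z"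
  by (induct Z) auto

lemma nq_add_WC:
  fixes a b :: "'a::real_normed_algebra_1"
  assumes W: "WC k a b" and A: "nq a" and B: "nq b"
  shows "nq (a + b)"
proof (rule nq_shift[where j = k])
  fix \<epsilon> :: real assume e: "\<epsilon> > 0"
  obtain C1 where C1: "\<And>n. norm (a^n) \<le> C1 * (\<epsilon>/2)^n" using nqD[OF A, of "\<epsilon>/2"] e by auto
  obtain C2 where C2: "\<And>n. norm (b^n) \<le> C2 * (\<epsilon>/2)^n" using nqD[OF B, of "\<epsilon>/2"] e by auto
  have c1: "C1 \<ge> 1" "C2 \<ge> 1" using nq_C_ge1 C1 C2 by blast+
  define u where "u = (a+b)^k"
  have g: "good a b u" unfolding u_def by (rule WC_good[OF W])
  have main: "norm (u * wd a b Z * (a+b)^j) \<le> 2^j * (norm u * C1 * C2 * (\<epsilon>/2)^(length Z + j))" for Z j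
  proof (induct j arbitrary: Z)
    case 0
    have "norm (u * wd a b Z * (a+b)^0) = norm (u * a^(length (filter (\<lambda>x. x) Z)) * b^(length (filter Not Z)))"
      using good_reorder[OF g] by simp
    also have "\<dots> \<le> norm u * norm (a^(length (filter (\<lambda>x. x) Z))) * norm (b^(length (filter Not Z)))"
      by (metis mult_right_mono norm_ge_zero norm_mult_ineq order.trans)
    also have "\<dots> \<le> norm u * (C1 * (\<epsilon>/2)^(length (filter (\<lambda>x. x) Z))) * (C2 * (\<epsilon>/2)^(length (filter Not Z)))"
      by (intro mult_mono mult_left_mono C1 C2) (use c1 e in auto)
    also have "\<dots> = norm u * C1 * C2 * (\<epsilon>/2)^(length Z)"
      by (simp add: filter_len[of Z, symmetric] power_add algebra_simps)
    finally show ?case by simp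
  next
    case (Suc j)
    have e1: "u * wd a b Z * (a+b)^Suc j = u * wd a b (Z @ [True]) * (a+b)^j + u * wd a b (Z @ [False]) * (a+b)^j"
      by (simp add: wd_snoc algebra_simps)
    have "norm (u * wd a b Z * (a+b)^Suc j) \<le> norm (u * wd a b (Z @ [True]) * (a+b)^j) + norm (u * wd a b (Z @ [False]) * (a+b)^j)"
      unfolding e1 by (rule norm_triangle_ineq)
    also have "\<dots> \<le> 2^j * (norm u * C1 * C2 * (\<epsilon>/2)^(length (Z @ [True]) + j)) + 2^j * (norm u * C1 * C2 * (\<epsilon>/2)^(length (Z @ [False]) + j))"
      by (intro add_mono Suc.hyps)
    also have "\<dots> = 2^Suc j * (norm u * C1 * C2 * (\<epsilon>/2)^(length Z + Suc j))" by simp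
    finally show ?case .
  qed
  show "\<exists>C. \<forall>m. norm ((a + b) ^ (m + k)) \<le> C * \<epsilon> ^ m"
  proof (intro exI allI)
    fix m
    have "norm ((a+b)^(m+k)) = norm (u * wd a b [] * (a+b)^m)"
      by (simp add: u_def power_add[symmetric] add.commute)
    also have "\<dots> \<le> 2^m * (norm u * C1 * C2 * (\<epsilon>/2)^m)" using main[of "[]" m] by simp
    also have "\<dots> = (norm u * C1 * C2) * \<epsilon>^m" by (simp add: power_divide)
    finally show "norm ((a+b)^(m+k)) \<le> (norm u * C1 * C2) * \<epsilon>^m" .
  qed
qed

lemma WC_comm: "a * b = b * a \<Longrightarrow> WC 0 a b"
  unfolding WC_def by simp

lemma nq_add_comm: "nq a \<Longrightarrow> nq b \<Longrightarrow> a * b = b * a \<Longrightarrow> nq (a + b)"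
  using nq_add_WC[OF WC_comm] by blast

lemma nq_diff_comm: "nq a \<Longrightarrow> nq b \<Longrightarrow> a * b = b * a \<Longrightarrow> nq (a - b)"
  using nq_add_comm[of a "-b"] nq_minus[of b] by simp

lemma WC_sym: "WC k a b \<Longrightarrow> WC k b a"
proof -
  have sw: "wd b a Z = wd a b (map Not Z)" for Z :: "bool list"
    by (induct Z) (auto simp: wd_Cons)
  assume "WC k a b"
  then show "WC k b a" unfolding WC_def sw by (metis length_map)
qed

definition commute :: "'a::ring_1 \<Rightarrow> 'a \<Rightarrow> bool" where
  "commute x y \<longleftrightarrow> x * y = y * x"

lemma commute_sym: "commute x y \<Longrightarrow> commute y x" unfolding commute_def by simp
lemma commute_refl: "commute x x" unfolding commute_def by simp
lemma commute_1r: "commute x 1" unfolding commute_def by simp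
lemma commute_1l: "commute 1 x" unfolding commute_def by simp
lemma commute_0r: "commute x 0" unfolding commute_def by simp
lemma commute_0l: "commute 0 x" unfolding commute_def by simp
lemma commute_multr: "commute x y \<Longrightarrow> commute x z \<Longrightarrow> commute x (y*z)"
  unfolding commute_def by (metis mult.assoc)
lemma commute_multl: "commute x z \<Longrightarrow> commute y z \<Longrightarrow> commute (x*y) z"
  unfolding commute_def by (metis mult.assoc)
lemma commute_addr: "commute x y \<Longrightarrow> commute x z \<Longrightarrow> commute x (y+z)"
  unfolding commute_def by (simp add: algebra_simps)
lemma commute_addl: "commute x z \<Longrightarrow> commute y z \<Longrightarrow> commute (x+y) z"
  unfolding commute_def by (simp add: algebra_simps)
lemma commute_diffr: "commute x y \<Longrightarrow> commute x z \<Longrightarrow> commute x (y-z)"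
  unfolding commute_def by (simp add: algebra_simps)
lemma commute_diffl: "commute x z \<Longrightarrow> commute y z \<Longrightarrow> commute (x-y) z"
  unfolding commute_def by (simp add: algebra_simps)
lemma commute_minusr: "commute x y \<Longrightarrow> commute x (-y)"
  unfolding commute_def by simp
lemma commute_minusl: "commute x y \<Longrightarrow> commute (-x) y"
  unfolding commute_def by simp
lemma commute_powr: "commute x y \<Longrightarrow> commute x (y^n)"
  unfolding commute_def by (metis power_commuting_commutes)
lemma commute_powl: "commute x y \<Longrightarrow> commute (x^n) y"
  unfolding commute_def by (metis power_commuting_commutes)
lemma commute_sumr: "(\<And>i. i \<in> A \<Longrightarrow> commute x (f i)) \<Longrightarrow> commute x (sum f A)"
  unfolding commute_def by (simp add: sum_distrib_left sum_distrib_right)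
lemma commute_suml: "(\<And>i. i \<in> A \<Longrightarrow> commute (f i) x) \<Longrightarrow> commute (sum f A) x"
  unfolding commute_def by (simp add: sum_distrib_left sum_distrib_right)
lemma commute_scaleRr: "commute x (y::'a::real_algebra_1) \<Longrightarrow> commute x (scaleR r y)"
  unfolding commute_def by simp
lemma commute_scaleRl: "commute x (y::'a::real_algebra_1) \<Longrightarrow> commute (scaleR r x) y"
  unfolding commute_def by simp
lemma commute_of_natr: "commute x (of_nat n)"
  unfolding commute_def by (simp add: mult_of_nat_commute)

lemmas commute_intros = commute_refl commute_1r commute_1l commute_0r commute_0l
  commute_multr commute_multl commute_addr commute_addl commute_diffr commute_diffl
  commute_minusr commute_minusl commute_powr commute_powl commute_scaleRr commute_scaleRl

lemma commuteD: "commute x y \<Longrightarrow> x * y = y * x" unfolding commute_def by simp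

lemma mult_power_commute: "commute x y \<Longrightarrow> (x * y) ^ n = x ^ n * y ^ n"
  unfolding commute_def by (rule mult_power_comm)

lemma nq_multl: "nq q \<Longrightarrow> commute u q \<Longrightarrow> nq (u * q)"
  unfolding commute_def by (rule nq_mult_comm(1))
lemma nq_multr: "nq q \<Longrightarrow> commute u q \<Longrightarrow> nq (q * u)"
  unfolding commute_def by (rule nq_mult_comm(2))
lemma nq_add: "nq a \<Longrightarrow> nq b \<Longrightarrow> commute a b \<Longrightarrow> nq (a + b)"
  unfolding commute_def by (rule nq_add_comm)
lemma nq_diff: "nq a \<Longrightarrow> nq b \<Longrightarrow> commute a b \<Longrightarrow> nq (a - b)"
  unfolding commute_def by (rule nq_diff_comm)

lemma nq_cong_add: "commute A Q \<Longrightarrow> nq Q \<Longrightarrow> nq (A + Q) \<longleftrightarrow> nq A"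
proof
  assume c: "commute A Q" and q: "nq Q" and "nq (A + Q)"
  moreover have "commute (A+Q) Q" using c by (intro commute_intros)
  ultimately show "nq A" using nq_diff[of "A+Q" Q] by simp
next
  assume "commute A Q" "nq Q" "nq A" then show "nq (A + Q)" using nq_add by blast
qed

section \<open>Neumann series and easy spectral facts\<close>

lemma neumann:
  fixes v :: "'a::{real_normed_algebra_1,banach}"
  assumes "nq v"
  shows "(1 - v) * (\<Sum>n. v^n) = 1" "(\<Sum>n. v^n) * (1 - v) = 1"
proof -
  obtain C where C: "\<And>n. norm (v^n) \<le> C * (1/2)^n" using nqD[OF assms, of "1/2"] by auto
  have sn: "summable (\<lambda>n. norm (v^n))"
  proof (rule summable_comparison_test'[where N=0])
    show "summable (\<lambda>n. C * (1/2::real)^n)" by (intro summable_mult summable_geometric) simp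
    show "norm (norm (v^n)) \<le> C * (1/2)^n" for n using C[of n] by simp
  qed
  have s: "summable (\<lambda>n. v^n)" by (rule summable_norm_cancel[OF sn])
  have lim: "(\<lambda>n. v^n) \<longlonglongrightarrow> 0" by (rule summable_LIMSEQ_zero[OF s])
  have t: "(\<lambda>n. v^n - v^Suc n) sums 1" using telescope_sums'[OF lim] by simp
  have "(1 - v) * (\<Sum>n. v^n) = (\<Sum>n. (1 - v) * v^n)" by (rule suminf_mult[OF s, symmetric])
  also have "\<dots> = (\<Sum>n. v^n - v^Suc n)" by (simp add: algebra_simps)
  also have "\<dots> = 1" using t by (rule sums_unique[symmetric])
  finally show "(1 - v) * (\<Sum>n. v^n) = 1" .
  have "(\<Sum>n. v^n) * (1 - v) = (\<Sum>n. v^n * (1 - v))" by (rule suminf_mult2[OF s])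
  also have "\<dots> = (\<Sum>n. v^n - v^Suc n)" by (simp add: algebra_simps power_commutes)
  also have "\<dots> = 1" using t by (rule sums_unique[symmetric])
  finally show "(\<Sum>n. v^n) * (1 - v) = 1" .
qed

lemma nq_inv:
  fixes v :: "'a::{real_normed_algebra_1,banach}"
  shows "nq v \<Longrightarrow> invertible_el (1 - v)"
  unfolding invertible_el_def using neumann by blast

lemma nq_inv_plus:
  fixes v :: "'a::{real_normed_algebra_1,banach}"
  shows "nq v \<Longrightarrow> invertible_el (1 + v)"
  using nq_inv[OF nq_minus, of v] by simp

lemma pow_inv: "(v::'a::ring_1) * w = 1 \<Longrightarrow> v^n * w^n = 1"
proof (induct n)
  case 0 then show ?case by simp
next
  case (Suc n)
  have "v^Suc n * w^Suc n = v * (v^n * w^n) * w" by (simp add: mult.assoc power_commutes)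
  then show ?case using Suc by simp
qed

lemma nq_not_inv:
  fixes v :: "'a::real_normed_algebra_1"
  assumes "nq v" shows "\<not> invertible_el v"
proof
  assume "invertible_el v"
  then obtain w where w: "v * w = 1" unfolding invertible_el_def by blast
  define d where "d = 1 / (2 * (norm w + 1))"
  have pw: "2 * norm w + 2 > 0" using norm_ge_zero[of w] by linarith
  have d0: "d > 0" unfolding d_def using pw by simp
  obtain C where C: "\<And>n. norm (v^n) \<le> C * d^n" using nqD[OF assms d0] by auto
  have C0: "C \<ge> 0" using nq_C_ge1[OF C] by simp
  have dw: "d * norm w < 1" "d * norm w \<ge> 0" using d0 pw unfolding d_def by (auto simp: field_simps)
  have "(1::'a) = 0"
  proof (rule bound_zero[OF _ dw(2) dw(1)])
    fix m
    have "norm (1::'a) = norm (v^m * w^m)" using pow_inv[OF w] by simp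
    also have "\<dots> \<le> norm (v^m) * norm (w^m)" by (rule norm_mult_ineq)
    also have "\<dots> \<le> (C * d^m) * norm w ^ m"
      by (intro mult_mono C norm_power_ineq) (use C0 d0 in auto)
    also have "\<dots> = C * (d * norm w)^m" by (simp add: power_mult_distrib)
    finally show "norm (1::'a) \<le> C * (d * norm w)^m" .
  qed
  then show False by simp
qed

lemma inv_mult: "invertible_el x \<Longrightarrow> invertible_el y \<Longrightarrow> invertible_el ((x::'a::ring_1) * y)"
  unfolding invertible_el_def by (metis mult.assoc mult_1_left)

lemma scaleC_zero_left[simp]: "scaleC 0 (x::'a::complex_banach_algebra_1) = 0"
  using scaleC_of_real[of 0 x] by simp
lemma scaleC_zero_right[simp]: "scaleC c (0::'a::complex_banach_algebra_1) = 0"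
  by (metis add_cancel_right_right scaleC_add_right)
lemma scaleC_1_left: "scaleC c (x::'a::complex_banach_algebra_1) = scaleC c 1 * x"
  using mult_scaleC_left[of c 1 x] by simp
lemma scaleC_1_right: "scaleC c (x::'a::complex_banach_algebra_1) = x * scaleC c 1"
  using mult_scaleC_right[of x c 1] by simp
lemma scaleC_diff_right: "scaleC c ((x::'a::complex_banach_algebra_1) - y) = scaleC c x - scaleC c y"
  by (metis add_diff_cancel diff_add_cancel scaleC_add_right)

lemma nq_quasinil:
  fixes q :: "'a::complex_banach_algebra_1"
  assumes "nq q" shows "quasinilpotent q"
  unfolding quasinilpotent_def spectrum_el_def
proof (intro set_eqI iffI)
  fix z assume z: "z \<in> {z. \<not> invertible_el (scaleC z 1 - q)}"
  show "z \<in> {0}"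
  proof (rule ccontr)
    assume "z \<notin> {0}" then have z0: "z \<noteq> 0" by simp
    have c: "commute (scaleC (1/z) 1) q" unfolding commute_def
      by (metis scaleC_1_left scaleC_1_right)
    have n: "nq (scaleC (1/z) 1 * q)" by (rule nq_multl[OF assms c])
    have "invertible_el (scaleC z 1 * (1 - scaleC (1/z) 1 * q))"
    proof (rule inv_mult)
      show "invertible_el (scaleC z (1::'a))" unfolding invertible_el_def
        by (rule exI[of _ "scaleC (1/z) 1"]) (simp add: mult_scaleC_left mult_scaleC_right scaleC_scaleC z0 scaleC_one)
      show "invertible_el (1 - scaleC (1/z) 1 * q)" by (rule nq_inv[OF n])
    qed
    moreover have "scaleC z 1 * (1 - scaleC (1/z) 1 * q) = scaleC z 1 - q"
      by (simp add: right_diff_distrib mult_scaleC_left mult_scaleC_right scaleC_scaleC z0 scaleC_one)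
    ultimately show False using z by simp
  qed
next
  fix z assume "z \<in> {0::complex}"
  then have "z = 0" by simp
  moreover have "\<not> invertible_el (- q)" by (rule nq_not_inv[OF nq_minus[OF assms]])
  ultimately show "z \<in> {z. \<not> invertible_el (scaleC z 1 - q)}" by simp
qed

section \<open>Idempotents and triangular decompositions\<close>

lemma idem_pow: "(f::'a::ring_1) * f = f \<Longrightarrow> n > 0 \<Longrightarrow> f^n = f"
proof (induct n)
  case 0 then show ?case by simp
next
  case (Suc n) then show ?case by (cases n) (simp_all add: power_Suc2)
qed

lemma idem_compl: "(e::'a::ring_1) * e = e \<Longrightarrow> (1 - e) * (1 - e) = 1 - e"
  by (simp add: algebra_simps)

lemma idem_orth: "(e::'a::ring_1) * e = e \<Longrightarrow> e * (1 - e) = 0 \<and> (1 - e) * e = 0"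
  by (simp add: algebra_simps)

lemma tri_off:
  fixes e T :: "'a::ring_1"
  assumes ee: "e * e = e" and z: "e * T * (1 - e) = 0"
  shows "e * T^m * (1 - e) = 0"
proof (induct m)
  case 0 then show ?case using idem_orth[OF ee] by simp
next
  case (Suc m)
  have "e * T^Suc m * (1 - e) = e * T^m * (e + (1 - e)) * T * (1 - e)"
    by (simp only: power_Suc2 mult.assoc) simp
  also have "\<dots> = e * T^m * (e * T * (1 - e)) + (e * T^m * (1 - e)) * (T * (1 - e))"
    by (simp only: distrib_left distrib_right mult.assoc ee)
  also have "\<dots> = 0" using z Suc by simp
  finally show ?case .
qed

lemma tri_corner_e:
  fixes e T :: "'a::ring_1"
  assumes ee: "e * e = e" and z: "e * T * (1 - e) = 0"
  shows "e * T^m * e = (e * T * e)^m * e"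
proof (induct m)
  case 0 then show ?case using ee by simp
next
  case (Suc m)
  have "e * T^Suc m * e = e * T^m * (e + (1 - e)) * T * e"
    by (simp only: power_Suc2 mult.assoc) simp
  also have "\<dots> = (e * T^m * e) * (T * e) + (e * T^m * (1 - e)) * (T * e)"
    by (simp only: distrib_left distrib_right mult.assoc)
  also have "\<dots> = (e * T * e)^m * e * (T * e)" using tri_off[OF ee z, of m] Suc by simp
  also have "\<dots> = (e * T * e)^Suc m * e"
    by (simp only: power_Suc2 mult.assoc ee)
  finally show ?case .
qed

lemma tri_corner_p:
  fixes e T :: "'a::ring_1"
  assumes ee: "e * e = e" and z: "e * T * (1 - e) = 0"
  shows "(1 - e) * T^m * (1 - e) = ((1 - e) * T * (1 - e))^m * (1 - e)"
proof (induct m)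
  case 0 then show ?case using idem_compl[OF ee] by simp
next
  case (Suc m)
  have "(1 - e) * T^Suc m * (1 - e) = (1 - e) * T^m * (e + (1 - e)) * T * (1 - e)"
    by (simp only: power_Suc2 mult.assoc) simp
  also have "\<dots> = ((1 - e) * T^m) * (e * T * (1 - e)) + ((1 - e) * T^m * (1 - e)) * (T * (1 - e))"
    by (simp only: distrib_left distrib_right mult.assoc)
  also have "\<dots> = ((1 - e) * T * (1 - e))^m * (1 - e) * (T * (1 - e))" using z Suc by simp
  also have "\<dots> = ((1 - e) * T * (1 - e))^Suc m * (1 - e)"
    by (simp only: power_Suc2 mult.assoc idem_compl[OF ee])
  finally show ?case .
qed

lemma corner_pow_e: "(e::'a::ring_1) * e = e \<Longrightarrow> n > 0 \<Longrightarrow> (e * T * e)^n * e = (e * T * e)^n"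
  by (metis (no_types, lifting) mult.assoc power_minus_mult)

lemma corner_pow_p: "(e::'a::ring_1) * e = e \<Longrightarrow> n > 0 \<Longrightarrow> ((1 - e) * T * (1 - e))^n * (1 - e) = ((1 - e) * T * (1 - e))^n"
  using corner_pow_e[OF idem_compl] by blast

lemma nq_via_shift:
  fixes q T :: "'a::real_normed_algebra_1"
  assumes T: "nq T" and K: "K \<ge> 0" and b: "\<And>m. norm (q^(m+j)) \<le> K * norm (T^(m+i))"
  shows "nq q"
proof (rule nq_shift[where j=j])
  fix \<epsilon> :: real assume e: "\<epsilon> > 0"
  obtain C where C: "\<And>n. norm (T^n) \<le> C * \<epsilon>^n" using nqD[OF T e] by auto
  show "\<exists>C. \<forall>m. norm (q^(m+j)) \<le> C * \<epsilon>^m"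
  proof (intro exI allI)
    fix m
    have "norm (q^(m+j)) \<le> K * (C * \<epsilon>^(m+i))" using b[of m] C[of "m+i"] K
      by (meson mult_left_mono order.trans)
    also have "\<dots> = (K * C * \<epsilon>^i) * \<epsilon>^m" by (simp add: power_add)
    finally show "norm (q^(m+j)) \<le> (K * C * \<epsilon>^i) * \<epsilon>^m" .
  qed
qed

lemma norm_mult3: "norm ((a::'a::real_normed_algebra) * b * c) \<le> norm a * norm b * norm c"
  by (metis mult_right_mono norm_ge_zero norm_mult_ineq order.trans)

lemma nq_corner:
  fixes e T :: "'a::real_normed_algebra_1"
  assumes ee: "e * e = e" and z: "e * T * (1 - e) = 0" and T: "nq T"
  shows "nq (e * T * e)" "nq ((1 - e) * T * (1 - e))"
proof -
  show "nq (e * T * e)"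
  proof (rule nq_via_shift[OF T, where j=1 and i=1 and K="norm e * norm e"])
    fix m
    have "(e * T * e)^(m+1) = e * T^(m+1) * e"
      using tri_corner_e[OF ee z, of "m+1"] corner_pow_e[OF ee, of "m+1"] by simp
    then show "norm ((e * T * e)^(m+1)) \<le> norm e * norm e * norm (T^(m+1))"
      using norm_mult3[of e "T^(m+1)" e] by (simp add: mult_ac)
  qed simp
  show "nq ((1 - e) * T * (1 - e))"
  proof (rule nq_via_shift[OF T, where j=1 and i=1 and K="norm (1-e) * norm (1-e)"])
    fix m
    have "((1 - e) * T * (1 - e))^(m+1) = (1 - e) * T^(m+1) * (1 - e)"
      using tri_corner_p[OF ee z, of "m+1"] corner_pow_p[OF ee, of "m+1"] by simp
    then show "norm (((1 - e) * T * (1 - e))^(m+1)) \<le> norm (1-e) * norm (1-e) * norm (T^(m+1))"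
      using norm_mult3[of "1-e" "T^(m+1)" "1-e"] by (simp add: mult_ac)
  qed simp
qed

lemma Te_pow:
  fixes e T :: "'a::ring_1"
  assumes ee: "e * e = e"
  shows "(T * e)^Suc m = T * (e * T * e)^m * e"
proof (induct m)
  case 0 then show ?case by simp
next
  case (Suc m)
  have ex: "e * ((e * T * e)^m * e) = (e * T * e)^m * e"
  proof (cases m)
    case 0 then show ?thesis using ee by simp
  next
    case (Suc k)
    have "e * (e * T * e)^m = (e * T * e)^m"
      unfolding Suc power_Suc by (simp add: mult.assoc[symmetric] ee)
    then show ?thesis by (simp add: mult.assoc[symmetric])
  qed
  have "(T * e)^Suc (Suc m) = (T * e)^Suc m * (T * e)" by (rule power_Suc2)
  also have "\<dots> = T * (e * T * e)^m * (e * T * e)" using Suc by (simp add: mult.assoc)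
  also have "\<dots> = T * (e * T * e)^Suc m * e" by (simp only: power_Suc2 mult.assoc ee)
  finally show ?case .
qed

lemma nq_tri:
  fixes e T :: "'a::real_normed_algebra_1"
  assumes ee: "e * e = e" and z: "e * T * (1 - e) = 0"
    and A: "nq (e * T * e)" and B: "nq ((1 - e) * T * (1 - e))"
  shows "nq T"
proof -
  have TeA: "nq (T * e)"
  proof (rule nq_via_shift[OF A, where j=1 and i=0 and K="norm T * norm e"])
    fix m
    show "norm ((T * e)^(m+1)) \<le> norm T * norm e * norm ((e * T * e)^(m+0))"
      using Te_pow[OF ee, of T m] norm_mult3[of T "(e * T * e)^m" e] by (simp add: mult_ac)
  qed simp
  have Tp: "T * (1 - e) = (1 - e) * T * (1 - e)"
  proof -
    have "T * (1 - e) = (e + (1 - e)) * T * (1 - e)" by simp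
    also have "\<dots> = (1 - e) * T * (1 - e)" using z by (simp only: distrib_right) simp
    finally show ?thesis .
  qed
  have orth: "(T * e) * (T * (1 - e)) = 0" using z by (simp add: mult.assoc)
  have "nq (T * e + T * (1 - e))" by (rule nq_add_orth[OF orth TeA]) (simp add: Tp B)
  then show ?thesis by (simp add: algebra_simps)
qed

definition GPn :: "'a::real_normed_algebra_1 \<Rightarrow> nat \<Rightarrow> bool" where
  "GPn y n \<longleftrightarrow> nq (y^n - (y^n)^2)"

definition GP :: "'a::real_normed_algebra_1 \<Rightarrow> bool" where
  "GP y \<longleftrightarrow> (\<exists>n>0. GPn y n)"

lemma GPn_mult:
  fixes y :: "'a::real_normed_algebra_1"
  assumes g: "GPn y n" and m: "m > 0"
  shows "GPn y (n * m)"
proof -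
  define Y where "Y = y^n"
  define S where "S = Y^(m-1) * (\<Sum>i<m. Y^i)"
  have q: "nq (Y - Y^2)" using g unfolding GPn_def Y_def .
  have geo: "(\<Sum>i<m. Y^i) * (1 - Y) = 1 - Y^m" using geo_ring'[of Y m]
    by (simp add: algebra_simps)
  have "S * (Y - Y^2) = Y^(m-1) * ((\<Sum>i<m. Y^i) * (1 - Y)) * Y"
    unfolding S_def by (simp add: algebra_simps power2_eq_square)
  also have "\<dots> = Y^(m-1) * Y - Y^(m-1) * Y^m * Y" unfolding geo by (simp add: algebra_simps)
  also have "\<dots> = Y^m - (Y^m)^2"
  proof -
    have "Y^(m-1) * Y = Y^m" using m by (rule power_minus_mult)
    moreover have "Y^(m-1) * Y^m * Y = Y^m * Y^m"
      using m by (metis (no_types, lifting) mult.assoc power_commutes power_minus_mult)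
    ultimately show ?thesis by (simp add: power2_eq_square)
  qed
  finally have eq: "Y^m - (Y^m)^2 = S * (Y - Y^2)" by simp
  have c: "commute S (Y - Y^2)" unfolding S_def
    by (intro commute_intros commute_suml)
  have "nq (Y^m - (Y^m)^2)" unfolding eq by (rule nq_multl[OF q c])
  then show ?thesis unfolding GPn_def Y_def by (simp add: power_mult)
qed

lemma GP_common:
  assumes "GP y" "GP z"
  shows "\<exists>n>0. GPn y n \<and> GPn z n"
proof -
  obtain n1 n2 where "n1 > 0" "GPn y n1" "n2 > 0" "GPn z n2" using assms unfolding GP_def by blast
  then show ?thesis using GPn_mult[of y n1 n2] GPn_mult[of z n2 n1]
    by (intro exI[of _ "n1 * n2"]) (auto simp: mult.commute)
qed

lemma nq_GPn: "nq z \<Longrightarrow> GPn z 1"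
proof -
  assume z: "nq z"
  have "z - z^2 = (1 - z) * z" by (simp add: algebra_simps power2_eq_square)
  moreover have "nq ((1 - z) * z)" by (rule nq_multl[OF z]) (intro commute_intros)
  ultimately show ?thesis unfolding GPn_def by simp
qed

lemma nq_GP: "nq z \<Longrightarrow> GP z"
  unfolding GP_def using nq_GPn by blast

lemma GP_tri:
  fixes e T :: "'a::real_normed_algebra_1"
  assumes ee: "e * e = e" and z: "e * T * (1 - e) = 0"
  shows "GP T \<longleftrightarrow> GP (e * T * e) \<and> GP ((1 - e) * T * (1 - e))"
proof -
  have key: "e * (T^n - (T^n)^2) * (1 - e) = 0 \<and>
     e * (T^n - (T^n)^2) * e = (e * T * e)^n - ((e * T * e)^n)^2 \<and>
     (1 - e) * (T^n - (T^n)^2) * (1 - e) = ((1 - e) * T * (1 - e))^n - (((1 - e) * T * (1 - e))^n)^2"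
    if n: "n > 0" for n
  proof -
    have p2: "(T^n)^2 = T^(2*n)" by (simp add: power_mult[symmetric] mult.commute)
    have q2: "((X::'a)^n)^2 = X^(2*n)" for X by (simp add: power_mult[symmetric] mult.commute)
    have n2: "2 * n > 0" using n by simp
    have s: "\<And>X Y A B. X * (A - B) * Y = X * A * Y - X * B * (Y::'a)" by (simp add: algebra_simps)
    show ?thesis unfolding p2 q2 s
      by (simp only: tri_off[OF ee z] tri_corner_e[OF ee z] tri_corner_p[OF ee z]
        corner_pow_e[OF ee n] corner_pow_e[OF ee n2] corner_pow_p[OF ee n] corner_pow_p[OF ee n2]) simp
  qed
  show ?thesis
  proof
    assume "GP T"
    then obtain n where n: "n > 0" "GPn T n" unfolding GP_def by blast
    then have D: "nq (T^n - (T^n)^2)" unfolding GPn_def by simp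
    have "e * (T^n - (T^n)^2) * (1 - e) = 0" using key[OF n(1)] by simp
    from nq_corner[OF ee this D] key[OF n(1)] n(1)
    show "GP (e * T * e) \<and> GP ((1 - e) * T * (1 - e))" unfolding GP_def GPn_def by auto
  next
    assume "GP (e * T * e) \<and> GP ((1 - e) * T * (1 - e))"
    then obtain n where n: "n > 0" "GPn (e * T * e) n" "GPn ((1 - e) * T * (1 - e)) n"
      using GP_common by blast
    have "nq (T^n - (T^n)^2)"
      by (rule nq_tri[OF ee]) (use key[OF n(1)] n in \<open>simp_all add: GPn_def\<close>)
    then show "GP T" using n(1) unfolding GP_def GPn_def by blast
  qed
qed

lemma nq_pert0:
  fixes Z Q :: "'a::real_normed_algebra_1"
  assumes c: "commute Z Q" and q: "nq Q"
  shows "nq ((Z + Q) - (Z + Q)^2) \<longleftrightarrow> nq (Z - Z^2)"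
proof -
  define R where "R = Q * (1 - Z - Z - Q)"
  have eq: "(Z + Q) - (Z + Q)^2 = (Z - Z^2) + R"
    using commuteD[OF c] unfolding R_def by (simp add: algebra_simps power2_eq_square)
  have cR: "commute Q (1 - Z - Z - Q)" using commute_sym[OF c] by (intro commute_intros)
  have nR: "nq R" unfolding R_def by (rule nq_multr[OF q commute_sym[OF cR]])
  have "commute (Z - Z^2) R" unfolding R_def using c by (intro commute_intros)
  then show ?thesis unfolding eq using nq_cong_add nR by blast
qed

lemma pow_pert:
  fixes X Q :: "'a::real_normed_algebra_1"
  assumes c: "commute X Q" and q: "nq Q"
  shows "\<exists>Q1. (X + Q)^n = X^n + Q1 \<and> nq Q1 \<and> commute (X^n) Q1"
proof -
  define S where "S = (\<Sum>i<n. (X + Q)^i * X^(n - Suc i))"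
  have d: "(X + Q)^n - X^n = Q * S"
    using diff_pow_comm[of "X + Q" X n] commuteD[OF c] unfolding S_def
    by (simp add: algebra_simps)
  have cS: "commute Q S" unfolding S_def using commute_sym[OF c]
    by (intro commute_intros commute_sumr)
  have "nq (Q * S)" by (rule nq_multr[OF q commute_sym[OF cS]])
  moreover have "commute (X^n) (Q * S)" unfolding S_def using c
    by (intro commute_intros commute_sumr)
  ultimately show ?thesis using d by (intro exI[of _ "Q * S"]) (simp add: algebra_simps)
qed

lemma GPn_pert:
  fixes X Q :: "'a::real_normed_algebra_1"
  assumes c: "commute X Q" and q: "nq Q"
  shows "GPn (X + Q) n \<longleftrightarrow> GPn X n"
proof -
  obtain Q1 where Q1: "(X + Q)^n = X^n + Q1" "nq Q1" "commute (X^n) Q1"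
    using pow_pert[OF c q] by blast
  show ?thesis unfolding GPn_def Q1(1) using nq_pert0[OF Q1(3) Q1(2)] .
qed

lemma GP_pert: "commute X Q \<Longrightarrow> nq Q \<Longrightarrow> GP (X + Q) \<longleftrightarrow> GP X"
  unfolding GP_def using GPn_pert by blast

lemma nq_kill:
  fixes w u X :: "'a::real_normed_algebra_1"
  assumes w: "nq w" and K: "K \<ge> 0"
    and b: "\<And>m. norm X \<le> K * (norm u ^ Suc m * norm (w ^ Suc m))"
  shows "X = 0"
proof -
  define \<epsilon> where "\<epsilon> = 1 / (2 * (norm u + 1))"
  have pu: "2 * (norm u + 1) > 0" by (smt (verit) norm_ge_zero)
  have e0: "\<epsilon> > 0" unfolding \<epsilon>_def using pu by simp
  obtain C where C: "\<And>n. norm (w^n) \<le> C * \<epsilon>^n" using nqD[OF w e0] by auto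
  have C0: "C \<ge> 0" using nq_C_ge1[OF C] by simp
  have d: "norm u * \<epsilon> < 1" "norm u * \<epsilon> \<ge> 0" using e0 pu unfolding \<epsilon>_def by (auto simp: field_simps)
  show ?thesis
  proof (rule bound_zero[OF _ d(2) d(1)])
    fix m
    have "norm X \<le> K * (norm u ^ Suc m * (C * \<epsilon> ^ Suc m))"
      using b[of m] C[of "Suc m"] K by (meson mult_left_mono norm_ge_zero order.trans zero_le_power)
    also have "\<dots> = (K * C * (norm u * \<epsilon>)) * (norm u * \<epsilon>)^m"
      by (simp add: power_mult_distrib mult_ac)
    finally show "norm X \<le> (K * C * (norm u * \<epsilon>)) * (norm u * \<epsilon>)^m" .
  qed
qed

section \<open>Generalized inverses (norm version)\<close>

definition GD :: "'a::real_normed_algebra_1 \<Rightarrow> 'a \<Rightarrow> bool" where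
  "GD a x \<longleftrightarrow> x * a * x = x \<and> a * x = x * a \<and> (\<exists>n>0. nq (a^n - a * x))"

lemma GD_basic:
  assumes "GD a x"
  shows "(a * x) * (a * x) = a * x" "x * (a * x) = x" "(a * x) * x = x"
    "commute a x" "commute a (a * x)" "commute x (a * x)" "x * a = a * x"
proof -
  have xax: "x * a * x = x" and c: "a * x = x * a" using assms unfolding GD_def by auto
  show "(a * x) * (a * x) = a * x" using xax by (simp add: mult.assoc)
  show "x * (a * x) = x" using xax by (simp add: mult.assoc)
  show "(a * x) * x = x" using xax c by (simp add: mult.assoc)
  show ca: "commute a x" using c unfolding commute_def .
  show "commute a (a * x)" using ca by (intro commute_intros)
  show "commute x (a * x)" using commute_sym[OF ca] by (intro commute_intros)
  show "x * a = a * x" using c by simp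
qed

lemma GD_nq_ap:
  assumes g: "GD a x"
  shows "nq (a * (1 - a * x))"
proof -
  define e where "e = a * x"
  obtain n where n: "n > 0" "nq (a^n - e)" using g unfolding GD_def e_def by blast
  have ee: "e * e = e" unfolding e_def by (rule GD_basic(1)[OF g])
  have ce: "commute a e" unfolding e_def by (rule GD_basic(5)[OF g])
  have p: "(1 - e)^n = 1 - e" by (rule idem_pow[OF idem_compl[OF ee] n(1)])
  have "(a * (1 - e))^n = a^n * (1 - e)"
    by (subst mult_power_commute) (use ce commute_sym[OF ce] p in \<open>auto intro!: commute_intros\<close>)
  also have "\<dots> = (a^n - e) * (1 - e)" using idem_orth[OF ee] by (simp add: algebra_simps)
  finally have eq: "(a * (1 - e))^n = (a^n - e) * (1 - e)" .
  have "nq ((a^n - e) * (1 - e))" by (rule nq_multr[OF n(2)]) (use ce commute_sym[OF ce] in \<open>intro commute_intros\<close>)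
  then have "nq ((a * (1 - e))^n)" unfolding eq .
  then have "nq (a * (1 - e))" using nq_pow_imp n(1) by blast
  then show ?thesis unfolding e_def .
qed

lemma GD_GPn:
  assumes g: "GD a x" and n: "nq (a^n - a * x)"
  shows "GPn a n"
proof -
  define e where "e = a * x"
  have ee: "e * e = e" unfolding e_def by (rule GD_basic(1)[OF g])
  have ce: "commute a e" unfolding e_def by (rule GD_basic(5)[OF g])
  have c: "commute e (a^n - e)" using commute_sym[OF ce] by (intro commute_intros)
  have "nq ((e + (a^n - e)) - (e + (a^n - e))^2) \<longleftrightarrow> nq (e - e^2)"
    by (rule nq_pert0[OF c]) (use n in \<open>simp add: e_def\<close>)
  moreover have "nq (e - e^2)" using ee by (simp add: power2_eq_square nq_zero)
  ultimately show ?thesis unfolding GPn_def by simp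
qed

lemma GD_GP: "GD a x \<Longrightarrow> GP a"
  unfolding GP_def GD_def using GD_GPn unfolding GD_def by blast

lemma GD_kill1:
  assumes gx: "GD a x" and gy: "GD a y"
  shows "(a * x) * (1 - a * y) = 0" "(1 - a * y) * (a * x) = 0"
proof -
  define e f where "e = a * x" and "f = a * y"
  have w: "nq (a * (1 - f))" unfolding f_def by (rule GD_nq_ap[OF gy])
  have cf: "commute a f" unfolding f_def by (rule GD_basic(5)[OF gy])
  have ff: "f * f = f" unfolding f_def by (rule GD_basic(1)[OF gy])
  have ee: "e * e = e" unfolding e_def by (rule GD_basic(1)[OF gx])
  have cx: "commute a x" by (rule GD_basic(4)[OF gx])
  have pw: "(a * (1 - f))^Suc m = a^Suc m * (1 - f)" for m
  proof -
    have pf: "(1 - f)^Suc m = 1 - f" by (rule idem_pow[OF idem_compl[OF ff]]) simp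
    have "commute a (1 - f)" using cf by (intro commute_intros)
    from mult_power_commute[OF this, of "Suc m"] show ?thesis unfolding pf .
  qed
  have ep: "e = x^Suc m * a^Suc m" "e = a^Suc m * x^Suc m" for m
  proof -
    have "e^Suc m = e" by (rule idem_pow[OF ee]) simp
    moreover have "e^Suc m = x^Suc m * a^Suc m"
    proof -
      have "e^Suc m = (x * a)^Suc m" unfolding e_def using GD_basic(7)[OF gx] by simp
      also have "\<dots> = x^Suc m * a^Suc m" by (rule mult_power_commute[OF commute_sym[OF cx]])
      finally show ?thesis .
    qed
    moreover have "e^Suc m = a^Suc m * x^Suc m" unfolding e_def
      by (rule mult_power_commute[OF cx])
    ultimately show "e = x^Suc m * a^Suc m" "e = a^Suc m * x^Suc m" by auto
  qed
  have c1p: "commute (a^Suc m) (1 - f)" for m using cf by (intro commute_intros)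
  show "e * (1 - f) = 0"
  proof (rule nq_kill[OF w, where u=x and K=1])
    fix m
    have "e * (1 - f) = x^Suc m * (a * (1 - f))^Suc m"
      unfolding pw by (subst ep(1)[of m]) (simp add: mult.assoc)
    moreover have "norm (x^Suc m * (a * (1 - f))^Suc m) \<le> norm x ^ Suc m * norm ((a * (1 - f))^Suc m)"
      by (rule order.trans[OF norm_mult_ineq mult_right_mono[OF norm_power_ineq norm_ge_zero]])
    ultimately show "norm (e * (1 - f)) \<le> 1 * (norm x ^ Suc m * norm ((a * (1 - f)) ^ Suc m))"
      by simp
  qed simp
  show "(1 - f) * e = 0"
  proof (rule nq_kill[OF w, where u=x and K=1])
    fix m
    have "(1 - f) * e = (a * (1 - f))^Suc m * x^Suc m"
      unfolding pw by (subst ep(2)[of m]) (simp only: mult.assoc[symmetric] commuteD[OF commute_sym[OF c1p]])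
    moreover have "norm ((a * (1 - f))^Suc m * x^Suc m) \<le> norm ((a * (1 - f))^Suc m) * norm x ^ Suc m"
      by (rule order.trans[OF norm_mult_ineq mult_left_mono[OF norm_power_ineq norm_ge_zero]])
    ultimately show "norm ((1 - f) * e) \<le> 1 * (norm x ^ Suc m * norm ((a * (1 - f)) ^ Suc m))"
      by (simp add: mult.commute)
  qed simp
qed

lemma GD_unique:
  assumes gx: "GD a x" and gy: "GD a y"
  shows "x = y"
proof -
  define e f where "e = a * x" and "f = a * y"
  have k1: "e * (1 - f) = 0" "(1 - f) * e = 0" using GD_kill1[OF gx gy] unfolding e_def f_def by auto
  have k2: "f * (1 - e) = 0" using GD_kill1[OF gy gx] unfolding e_def f_def by auto
  have "e = f * e" using k1(2) by (simp add: algebra_simps)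
  also have "\<dots> = f" using k2 by (simp add: algebra_simps)
  finally have ef: "e = f" .
  have "x = x * e" using GD_basic(2)[OF gx] unfolding e_def by simp
  also have "\<dots> = x * f" using ef by simp
  also have "\<dots> = e * y" unfolding e_def f_def by (simp add: mult.assoc[symmetric] GD_basic(7)[OF gx])
  also have "\<dots> = f * y" using ef by simp
  also have "\<dots> = y" unfolding f_def by (rule GD_basic(3)[OF gy])
  finally show ?thesis .
qed

section \<open>Coefficients of the inverse square root\<close>

definition alpha :: "nat \<Rightarrow> real" where
  "alpha n = ((-1/2::real) gchoose n) * (-4)^n"

lemma gchoose_half_bound: "\<bar>(-1/2::real) gchoose n\<bar> \<le> 1"
proof -
  have e: "fact n * ((-1/2::real) gchoose n) = (\<Prod>i = 0..<n. -1/2 - of_nat i)"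
    by (rule gbinomial_mult_fact)
  have "\<bar>\<Prod>i = 0..<n. (-1/2::real) - of_nat i\<bar> = (\<Prod>i = 0..<n. \<bar>-1/2 - of_nat i\<bar>)"
    by (rule abs_prod)
  also have "\<dots> \<le> (\<Prod>i = 0..<n. of_nat (Suc i))"
    by (rule prod_mono) auto
  also have "\<dots> = fact n" by (simp add: fact_prod_Suc)
  finally have le: "\<bar>\<Prod>i = 0..<n. (-1/2::real) - of_nat i\<bar> \<le> fact n" .
  have "fact n * \<bar>(-1/2::real) gchoose n\<bar> = \<bar>fact n * ((-1/2::real) gchoose n)\<bar>"
    by (simp add: abs_mult)
  also have "\<dots> \<le> fact n" using le e by simp
  finally have "fact n * \<bar>(-1/2::real) gchoose n\<bar> \<le> fact n" .
  then show ?thesis by (simp add: mult_le_cancel_left1)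
qed

lemma alpha_bound: "\<bar>alpha n\<bar> \<le> 4^n"
  unfolding alpha_def abs_mult using gchoose_half_bound[of n]
  by (simp add: power_abs mult_left_le_one_le)

lemma alpha_0: "alpha 0 = 1" unfolding alpha_def by simp

lemma alpha_conv: "(\<Sum>i\<le>n. alpha i * alpha (n - i)) = 4^n"
proof -
  have "(\<Sum>i\<le>n. alpha i * alpha (n - i)) =
        (\<Sum>i=0..n. ((-1/2::real) gchoose i) * ((-1/2) gchoose (n - i))) * (-4)^n"
    unfolding alpha_def sum_distrib_right atMost_atLeast0
    by (intro sum.cong refl) (simp add: power_add[symmetric] mult_ac)
  also have "(\<Sum>i=0..n. ((-1/2::real) gchoose i) * ((-1/2) gchoose (n - i))) = (-1) gchoose n"
    using gbinomial_Vandermonde[of "-1/2::real" "-1/2" n] by simp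
  also have "((-1::real) gchoose n) = (-1)^n"
    using gbinomial_minus[of "1::real" n] binomial_gbinomial[of n n] by simp
  also have "(-1::real)^n * (-4)^n = 4^n" by (simp add: power_mult_distrib[symmetric])
  finally show ?thesis .
qed

lemma scaleR_pow: "(k *\<^sub>R (x::'a::real_normed_algebra_1))^n = k^n *\<^sub>R x^n"
  by (induct n) simp_all

lemma commute_suminf:
  fixes g :: "nat \<Rightarrow> 'a::{real_normed_algebra_1,banach}"
  assumes "summable g" "\<And>n. commute x (g n)"
  shows "commute x (suminf g)"
proof -
  have "x * suminf g = (\<Sum>n. x * g n)" by (rule suminf_mult[OF assms(1), symmetric])
  also have "\<dots> = (\<Sum>n. g n * x)" using assms(2) unfolding commute_def by simp
  also have "\<dots> = suminf g * x" by (rule suminf_mult2[OF assms(1), symmetric])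
  finally show ?thesis unfolding commute_def .
qed

lemma summable_geo_bound:
  fixes A :: "nat \<Rightarrow> 'a::{real_normed_algebra_1,banach}"
  assumes "\<And>n. norm (A n) \<le> K * (1/2)^n"
  shows "summable (\<lambda>n. norm (A n))" "summable A"
proof -
  show s: "summable (\<lambda>n. norm (A n))"
  proof (rule summable_comparison_test'[where N=0])
    show "summable (\<lambda>n. K * (1/2::real)^n)" by (intro summable_mult summable_geometric) simp
    show "norm (norm (A n)) \<le> K * (1/2)^n" for n using assms[of n] by simp
  qed
  show "summable A" by (rule summable_norm_cancel[OF s])
qed

section \<open>Lifting idempotents\<close>

lemma lift:
  fixes c :: "'a::{real_normed_algebra_1,banach}"
  assumes rq: "nq (c - c^2)"
  shows "\<exists>f. f * f = f \<and> commute f c \<and> nq (c - f)"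
proof -
  define r where "r = c - c^2"
  have r: "nq r" using rq unfolding r_def .
  obtain C where C: "\<And>n. norm (r^n) \<le> C * (1/8)^n" using nqD[OF r, of "1/8"] by auto
  have C1: "C \<ge> 1" using nq_C_ge1[OF C] .
  have cr: "commute c r" unfolding r_def by (intro commute_intros)
  define A where "A n = alpha n *\<^sub>R r^n" for n
  have nA: "norm (A n) \<le> C * (1/2)^n" for n
  proof -
    have "norm (A n) = \<bar>alpha n\<bar> * norm (r^n)" unfolding A_def by simp
    also have "\<dots> \<le> 4^n * (C * (1/8)^n)"
      by (intro mult_mono alpha_bound C) (use C1 in auto)
    also have "\<dots> = C * (1/2)^n"
    proof -
      have p: "(4::real)^n * (1/8)^n = (1/2)^n" by (simp add: power_mult_distrib[symmetric])
      show ?thesis by (metis mult.left_commute p)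
    qed
    finally show ?thesis .
  qed
  note sA = summable_geo_bound[OF nA]
  define s where "s = suminf A"
  define T where "T n = alpha (Suc n) *\<^sub>R r^n" for n
  have nT: "norm (T n) \<le> (4 * C) * (1/2)^n" for n
  proof -
    have "norm (T n) = \<bar>alpha (Suc n)\<bar> * norm (r^n)" unfolding T_def by simp
    also have "\<dots> \<le> 4^Suc n * (C * (1/8)^n)"
      by (intro mult_mono alpha_bound C) (use C1 in auto)
    also have "\<dots> = (4 * C) * (1/2)^n"
    proof -
      have p: "(4::real)^n * (1/8)^n = (1/2)^n" by (simp add: power_mult_distrib[symmetric])
      show ?thesis by (simp add: p mult_ac)
    qed
    finally show ?thesis .
  qed
  note sT = summable_geo_bound[OF nT]
  define t where "t = suminf T"
  define v where "v = (4::real) *\<^sub>R r"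
  have v: "nq v" unfolding v_def by (rule nq_scaleR[OF r])
  have ss: "s * s = (\<Sum>n. v^n)"
  proof -
    have "s * s = (\<Sum>k. \<Sum>i\<le>k. A i * A (k - i))"
      unfolding s_def by (rule Cauchy_product[OF sA(1) sA(1)])
    also have "\<dots> = (\<Sum>k. v^k)"
    proof (rule suminf_cong)
      fix k
      have "(\<Sum>i\<le>k. A i * A (k - i)) = (\<Sum>i\<le>k. (alpha i * alpha (k - i)) *\<^sub>R r^k)"
      proof (rule sum.cong[OF refl])
        fix i assume "i \<in> {..k}"
        then have "r^i * r^(k-i) = r^k" by (simp add: power_add[symmetric])
        then show "A i * A (k - i) = (alpha i * alpha (k - i)) *\<^sub>R r^k"
          unfolding A_def by simp
      qed
      also have "\<dots> = (\<Sum>i\<le>k. alpha i * alpha (k - i)) *\<^sub>R r^k"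
        by (simp add: scaleR_sum_left)
      also have "\<dots> = v^k" unfolding alpha_conv v_def scaleR_pow ..
      finally show "(\<Sum>i\<le>k. A i * A (k - i)) = v^k" .
    qed
    finally show ?thesis .
  qed
  have inv: "(1 - v) * (s * s) = 1" unfolding ss by (rule neumann(1)[OF v])
  have cs: "commute c s" unfolding s_def
    by (rule commute_suminf[OF sA(2)]) (unfold A_def, use cr in \<open>intro commute_intros\<close>)
  have crt: "commute r t" unfolding t_def
    by (rule commute_suminf[OF sT(2)]) (unfold T_def, intro commute_intros)
  have ct: "commute c t" unfolding t_def
    by (rule commute_suminf[OF sT(2)]) (unfold T_def, use cr in \<open>intro commute_intros\<close>)
  have s1: "s - 1 = r * t"
  proof -
    have "(\<Sum>n. A (Suc n)) = s - A 0" unfolding s_def by (rule suminf_split_head[OF sA(2)])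
    moreover have "A 0 = 1" unfolding A_def alpha_0 by simp
    moreover have "(\<Sum>n. A (Suc n)) = r * t"
    proof -
      have "(\<Sum>n. A (Suc n)) = (\<Sum>n. r * T n)"
        unfolding A_def T_def by (simp add: mult.assoc)
      also have "\<dots> = r * t" unfolding t_def by (rule suminf_mult[OF sT(2)])
      finally show ?thesis .
    qed
    ultimately show ?thesis by simp
  qed
  define w where "w = 2 *\<^sub>R c - 1"
  have h4: "(4::real) *\<^sub>R c = 2 *\<^sub>R c + 2 *\<^sub>R c" by (simp add: scaleR_add_left[symmetric])
  have ww: "w * w = 1 - v"
    unfolding w_def v_def r_def by (simp add: algebra_simps power2_eq_square scaleR_diff_right h4)
  have cws: "commute w s" unfolding w_def using cs by (intro commute_intros)
  define f where "f = (1/2) *\<^sub>R (1 + w * s)"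
  have wsws: "w * s * (w * s) = 1"
  proof -
    have "w * s * (w * s) = w * (s * w) * s" by (simp add: mult.assoc)
    also have "\<dots> = w * (w * s) * s" using commuteD[OF cws] by simp
    also have "\<dots> = (w * w) * (s * s)" by (simp add: mult.assoc)
    also have "\<dots> = 1" unfolding ww by (rule inv)
    finally show ?thesis .
  qed
  have ff: "f * f = f"
  proof -
    have "f * f = (1/4) *\<^sub>R ((1 + w * s) * (1 + w * s))" unfolding f_def by simp
    also have "(1 + w * s) * (1 + w * s) = 2 *\<^sub>R (1 + w * s)"
      using wsws by (simp add: algebra_simps scaleR_2)
    finally show ?thesis unfolding f_def by simp
  qed
  have cf: "commute f c" unfolding f_def w_def using commute_sym[OF cs]
    by (intro commute_intros)
  have h2: "c = (1/2) *\<^sub>R c + (1/2) *\<^sub>R c" by (simp add: scaleR_add_left[symmetric])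
  have cf_eq: "c - f = - ((1/2) *\<^sub>R (w * (r * t)))"
    unfolding f_def s1[symmetric] w_def by (subst h2) (simp add: algebra_simps scaleR_2)
  have n1: "nq (r * t)" by (rule nq_multr[OF r commute_sym[OF crt]])
  have n2: "nq (w * (r * t))"
    by (rule nq_multl[OF n1]) (unfold w_def, use cr ct in \<open>intro commute_intros\<close>)
  have "nq (c - f)" unfolding cf_eq by (intro nq_minus nq_scaleR n2)
  then show ?thesis using ff cf by blast
qed

lemma bicomm:
  fixes c f y :: "'a::{real_normed_algebra_1,banach}"
  assumes ff: "f * f = f" and cf: "commute f c" and q: "nq (c - f)" and cy: "commute y c"
  shows "commute y f"
proof -
  define q0 where "q0 = c - f"
  have nq0: "nq q0" using q unfolding q0_def .
  obtain v where v: "(1 + q0) * v = 1" "v * (1 + q0) = 1"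
    using nq_inv_plus[OF nq0] unfolding invertible_el_def by blast
  have vc: "commute v c"
    using inv_el_comm[OF v, of c] unfolding commute_def q0_def using commuteD[OF cf]
    by (simp add: algebra_simps)
  have vf: "commute v f"
    using inv_el_comm[OF v, of f] unfolding commute_def q0_def using commuteD[OF cf]
    by (simp add: algebra_simps)
  have cfq: "c * f = (1 + q0) * f" unfolding q0_def using ff by (simp add: algebra_simps)
  have vcf: "v * (c * f) = f" unfolding cfq by (simp add: mult.assoc[symmetric] v(2))
  have pwf: "X^k * f = f" if "X * f = f" for X k
  proof (induct k)
    case 0 then show ?case by simp
  next
    case (Suc k)
    have "X^Suc k * f = X^k * (X * f)" by (simp only: power_Suc2 mult.assoc)
    then show ?case using Suc that by simp
  qed
  have vcf': "(v * c) * f = f" using vcf by (simp add: mult.assoc)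
  have fk: "v^k * (c^k * f) = f" for k
    using pwf[OF vcf', of k] mult_power_commute[OF vc, of k] by (simp add: mult.assoc)
  have fk2: "c^k * (v^k * f) = f" for k
  proof -
    have "c^k * v^k = v^k * c^k" using commuteD[OF commute_powr[OF commute_powl[OF vc], of k k]] by simp
    then show ?thesis using fk[of k] by (simp add: mult.assoc[symmetric])
  qed
  define W where "W = (1 - f) * q0"
  have cq: "commute (1 - f) q0" unfolding q0_def using cf by (intro commute_intros)
  have nW: "nq W" unfolding W_def by (rule nq_multl[OF nq0 cq])
  have pc: "(1 - f) * c^Suc m = W^Suc m" for m
  proof -
    have c1: "commute (1 - f) c" using cf by (intro commute_intros)
    have "(1 - f) * c = W" unfolding W_def q0_def using ff by (simp add: algebra_simps)
    moreover have "((1 - f) * c)^Suc m = (1 - f)^Suc m * c^Suc m" by (rule mult_power_commute[OF c1])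
    moreover have "(1 - f)^Suc m = 1 - f" by (rule idem_pow[OF idem_compl[OF ff]]) simp
    ultimately show ?thesis by simp
  qed
  have cp: "c^Suc m * (1 - f) = W^Suc m" for m
  proof -
    have "commute (c^Suc m) (1 - f)" using commute_sym[OF cf] by (intro commute_intros)
    then show ?thesis using pc[of m] unfolding commute_def by simp
  qed
  have yck: "y * c^k = c^k * y" for k using commuteD[OF commute_powr[OF cy]] by simp
  have k1: "(1 - f) * y * f = 0"
  proof (rule nq_kill[OF nW, where u=v and K="norm y * norm f"])
    fix m
    define K where "K = Suc m"
    have "(1 - f) * y * (c^K * (v^K * f)) = (1 - f) * (y * c^K) * v^K * f" by (simp only: mult.assoc)
    also have "\<dots> = ((1 - f) * c^K) * y * v^K * f" by (simp only: yck mult.assoc)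
    also have "\<dots> = W^K * y * v^K * f" unfolding K_def by (simp only: pc)
    finally have eq: "(1 - f) * y * f = W^K * y * v^K * f" unfolding fk2 .
    have "norm (W^K * y * v^K * f) \<le> norm (W^K) * norm y * norm (v^K) * norm f"
      by (intro order.trans[OF norm_mult_ineq] mult_right_mono norm_mult3 norm_ge_zero)
    also have "\<dots> \<le> norm (W^K) * norm y * norm v ^ K * norm f"
      by (intro mult_right_mono mult_left_mono norm_power_ineq) auto
    also have "\<dots> = norm y * norm f * (norm v ^ K * norm (W ^ K))" by (simp add: mult_ac)
    finally show "norm ((1 - f) * y * f) \<le> norm y * norm f * (norm v ^ Suc m * norm (W ^ Suc m))"
      unfolding eq K_def .
  qed simp
  have k2: "f * y * (1 - f) = 0"
  proof (rule nq_kill[OF nW, where u=v and K="norm y * norm f"])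
    fix m
    define K where "K = Suc m"
    have cfK: "c^K * f = f * c^K" using commuteD[OF commute_powl[OF commute_sym[OF cf], of K]] by simp
    have "(v^K * (c^K * f)) * y * (1 - f) = v^K * (f * c^K) * y * (1 - f)" by (simp only: cfK)
    also have "\<dots> = v^K * f * (c^K * y) * (1 - f)" by (simp only: mult.assoc)
    also have "\<dots> = v^K * f * (y * c^K) * (1 - f)" by (simp only: yck)
    also have "\<dots> = v^K * f * y * (c^K * (1 - f))" by (simp only: mult.assoc)
    also have "\<dots> = v^K * f * y * W^K" unfolding K_def by (simp only: cp)
    finally have eq: "f * y * (1 - f) = v^K * f * y * W^K" unfolding fk .
    have "norm (v^K * f * y * W^K) \<le> norm (v^K) * norm f * norm y * norm (W^K)"
      by (intro order.trans[OF norm_mult_ineq] mult_right_mono norm_mult3 norm_ge_zero)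
    also have "\<dots> \<le> norm v ^ K * norm f * norm y * norm (W^K)"
      by (intro mult_right_mono norm_power_ineq) auto
    also have "\<dots> = norm y * norm f * (norm v ^ K * norm (W ^ K))" by (simp add: mult_ac)
    finally show "norm (f * y * (1 - f)) \<le> norm y * norm f * (norm v ^ Suc m * norm (W ^ Suc m))"
      unfolding eq K_def .
  qed simp
  have "y * f = f * y * f" using k1 by (simp add: algebra_simps)
  also have "\<dots> = f * y" using k2 by (simp add: algebra_simps ff)
  finally show ?thesis unfolding commute_def .
qed

lemma zpow:
  fixes B f :: "'a::ring_1"
  assumes ff: "f * f = f" and c: "commute B f"
  shows "(B * f + (1 - f))^Suc m = B^Suc m * f + (1 - f)"
proof (induct m)
  case 0 then show ?case by simp
next
  case (Suc m)
  have "(B * f + (1 - f))^Suc (Suc m) = (B^Suc m * f + (1 - f)) * (B * f + (1 - f))"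
    using Suc by (simp only: power_Suc2)
  also have "\<dots> = B^Suc m * (f * B) * f + B^Suc m * (f * (1 - f)) + (1 - f) * B * f + (1 - f) * (1 - f)"
    by (simp add: algebra_simps)
  also have "\<dots> = B^Suc (Suc m) * f + (1 - f)"
  proof -
    have fB: "f * B = B * f" using c unfolding commute_def by simp
    have a1: "B^Suc m * (f * B) * f = B^Suc (Suc m) * f"
      by (simp only: fB mult.assoc ff power_Suc2)
    have a2: "B^Suc m * (f * (1 - f)) = 0" using idem_orth[OF ff] by simp
    have a3: "(1 - f) * B * f = 0"
    proof -
      have "(1 - f) * B * f = ((1 - f) * f) * B" by (simp only: mult.assoc fB)
      then show ?thesis using idem_orth[OF ff] by simp
    qed
    show ?thesis unfolding a1 a2 a3 idem_compl[OF ff] by simp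
  qed
  finally show ?case .
qed

lemma GP_GD:
  fixes B :: "'a::{real_normed_algebra_1,banach}"
  assumes "GP B"
  shows "\<exists>y. GD B y"
proof -
  obtain n where n: "n > 0" "nq (B^n - (B^n)^2)" using assms unfolding GP_def GPn_def by blast
  obtain f where f: "f * f = f" "commute f (B^n)" "nq (B^n - f)" using lift[OF n(2)] by blast
  have cBf: "commute B f" by (rule bicomm[OF f]) (intro commute_intros)
  define z where "z = B * f + (1 - f)"
  obtain k where k: "n = Suc k" using n(1) by (cases n) auto
  have zn: "z^n = 1 + (B^n - f) * f"
    unfolding z_def k zpow[OF f(1) cBf] using f(1) by (simp add: algebra_simps)
  have "nq ((B^n - f) * f)" by (rule nq_multr[OF f(3)]) (use cBf commute_sym[OF cBf] in \<open>intro commute_intros\<close>)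
  then obtain W where W: "z^n * W = 1" "W * z^n = 1" unfolding zn
    using nq_inv_plus unfolding invertible_el_def by blast
  define R where "R = z^k * W"
  have zR: "z * R = 1" unfolding R_def using W(1) unfolding k by (simp add: mult.assoc)
  have Lz: "(W * z^k) * z = 1" using W(2) unfolding k by (simp add: mult.assoc power_commutes)
  have Rz: "R * z = 1" using inv_el_unique[OF zR Lz] Lz by simp
  have fB: "f * B = B * f" using cBf unfolding commute_def by simp
  have fBx: "f * (B * x) = B * (f * x)" for x by (simp add: mult.assoc[symmetric] fB)
  have ffx: "f * (f * x) = f * x" for x by (simp add: mult.assoc[symmetric] f(1))
  have czB: "z * B = B * z" unfolding z_def by (simp add: algebra_simps fB)
  have czf: "z * f = f * z" unfolding z_def by (simp add: algebra_simps fB fBx ffx f(1))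
  have RB: "R * B = B * R" by (rule inv_el_comm[OF zR Rz czB])
  have Rf: "R * f = f * R" by (rule inv_el_comm[OF zR Rz czf])
  have zf: "z * f = B * f" unfolding z_def using f(1) idem_orth[OF f(1)] by (simp add: algebra_simps)
  define y where "y = R * f"
  have By: "B * y = f"
  proof -
    have "B * y = R * (B * f)" unfolding y_def using RB by (simp add: mult.assoc[symmetric])
    also have "\<dots> = R * z * f" unfolding zf[symmetric] by (simp add: mult.assoc)
    also have "\<dots> = f" using Rz by simp
    finally show ?thesis .
  qed
  have "y * B * y = y"
  proof -
    have "y * B * y = R * (f * B) * (R * f)" unfolding y_def by (simp only: mult.assoc)
    also have "\<dots> = R * B * (f * R) * f" by (simp only: fB mult.assoc)
    also have "\<dots> = R * B * (R * f) * f" by (simp only: Rf[symmetric])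
    also have "\<dots> = R * (B * y)" unfolding y_def by (simp only: mult.assoc f(1))
    also have "\<dots> = y" using By unfolding y_def by simp
    finally show ?thesis .
  qed
  moreover have "B * y = y * B"
  proof -
    have fB: "f * B = B * f" using cBf unfolding commute_def by simp
    have "B * y = (B * R) * f" unfolding y_def by (simp only: mult.assoc)
    also have "\<dots> = R * (B * f)" by (simp only: RB[symmetric] mult.assoc)
    also have "\<dots> = y * B" unfolding y_def by (simp only: fB[symmetric] mult.assoc)
    finally show ?thesis .
  qed
  moreover have "nq (B^n - B * y)" unfolding By by (rule f(3))
  ultimately have "GD B y" unfolding GD_def using n(1) by blast
  then show ?thesis by blast
qed

lemma scaleC_minus_left: "scaleC (-c) (x::'a::complex_banach_algebra_1) = - scaleC c x"
proof -
  have "scaleC (-c) x + scaleC c x = 0" using scaleC_add_left[of "-c" c x] by simp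
  then show ?thesis by (simp add: eq_neg_iff_add_eq_0)
qed

lemma scaleC_diff_left: "scaleC (c - d) (x::'a::complex_banach_algebra_1) = scaleC c x - scaleC d x"
  using scaleC_add_left[of c "-d" x] scaleC_minus_left[of d x] by simp

lemma scaleC_sum_left: "scaleC (\<Sum>i\<in>A. f i) (x::'a::complex_banach_algebra_1) = (\<Sum>i\<in>A. scaleC (f i) x)"
  by (induct A rule: infinite_finite_induct) (simp_all add: scaleC_add_left)

lemma scaleC_sum_right: "scaleC c (\<Sum>i\<in>A. f i) = (\<Sum>i\<in>A. scaleC c (f i::'a::complex_banach_algebra_1))"
  by (induct A rule: infinite_finite_induct) (simp_all add: scaleC_add_right)

lemma scaleC_pow: "(scaleC c (x::'a::complex_banach_algebra_1))^n = scaleC (c^n) (x^n)"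
  by (induct n) (simp_all add: scaleC_one mult_scaleC_left mult_scaleC_right scaleC_scaleC mult.commute)

lemma scaleC_of_nat1: "scaleC (of_nat n) (1::'a::complex_banach_algebra_1) = of_nat n"
proof -
  have "scaleC (of_nat n) (1::'a) = scaleC (complex_of_real (real n)) 1" by simp
  also have "\<dots> = real n *\<^sub>R 1" by (rule scaleC_of_real)
  also have "\<dots> = of_nat n" by (simp add: of_real_def[symmetric])
  finally show ?thesis .
qed

lemma scaleC_comm: "x * y = y * x \<Longrightarrow> scaleC c x * y = y * scaleC c (x::'a::complex_banach_algebra_1)"
  by (simp add: mult_scaleC_left mult_scaleC_right)

section \<open>The resolvent of a quasinilpotent element\<close>

definition Rs :: "'a::complex_banach_algebra_1 \<Rightarrow> complex \<Rightarrow> 'a" where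
  "Rs q z = inv_el (1 - scaleC z q)"

lemma qnil_inv:
  fixes q :: "'a::complex_banach_algebra_1"
  assumes qn: "quasinilpotent q"
  shows "invertible_el (1 - scaleC z q)"
proof (cases "z = 0")
  case True
  then show ?thesis unfolding invertible_el_def by (intro exI[of _ 1]) simp
next
  case False
  have "1 / z \<notin> spectrum_el q" using qn False unfolding quasinilpotent_def by simp
  then have i1: "invertible_el (scaleC (1 / z) 1 - q)" unfolding spectrum_el_def by simp
  have i2: "invertible_el (scaleC z (1::'a))" unfolding invertible_el_def
    by (rule exI[of _ "scaleC (1/z) 1"]) (simp add: mult_scaleC_left mult_scaleC_right scaleC_scaleC False scaleC_one)
  have "scaleC z 1 * (scaleC (1 / z) 1 - q) = 1 - scaleC z q"
    by (simp add: right_diff_distrib mult_scaleC_left mult_scaleC_right scaleC_scaleC False scaleC_one)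
  then show ?thesis using inv_mult[OF i2 i1] by simp
qed

lemma Rs_inv:
  fixes q :: "'a::complex_banach_algebra_1"
  assumes qn: "quasinilpotent q"
  shows "(1 - scaleC z q) * Rs q z = 1" "Rs q z * (1 - scaleC z q) = 1"
  using inv_el[OF qnil_inv[OF qn]] unfolding Rs_def by auto

lemma Rs_diff:
  fixes q :: "'a::complex_banach_algebra_1"
  assumes qn: "quasinilpotent q"
  shows "Rs q z - Rs q w = Rs q z * scaleC (z - w) q * Rs q w"
proof -
  have "Rs q z * ((1 - scaleC w q) - (1 - scaleC z q)) * Rs q w =
        Rs q z * ((1 - scaleC w q) * Rs q w) - (Rs q z * (1 - scaleC z q)) * Rs q w"
    by (simp add: algebra_simps)
  also have "\<dots> = Rs q z - Rs q w" using Rs_inv[OF qn] by simp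
  finally show ?thesis by (simp add: scaleC_diff_left)
qed

lemma Rs_norm_diff:
  fixes q :: "'a::complex_banach_algebra_1"
  assumes qn: "quasinilpotent q"
  shows "norm (Rs q z - Rs q w) \<le> cmod (z - w) * (norm (Rs q z) * norm q * norm (Rs q w))"
proof -
  have "norm (Rs q z - Rs q w) \<le> norm (Rs q z) * norm (scaleC (z - w) q) * norm (Rs q w)"
    unfolding Rs_diff[OF qn] by (rule norm_mult3)
  also have "\<dots> = cmod (z - w) * (norm (Rs q z) * norm q * norm (Rs q w))"
    by (simp add: norm_scaleC mult_ac)
  finally show ?thesis .
qed

lemma Rs_local:
  fixes q :: "'a::complex_banach_algebra_1"
  assumes qn: "quasinilpotent q" and h: "cmod (w - z) * norm (Rs q z) * norm q \<le> 1/2"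
  shows "norm (Rs q w) \<le> 2 * norm (Rs q z)"
proof -
  have "norm (Rs q w) \<le> norm (Rs q z) + norm (Rs q z - Rs q w)"
    using norm_triangle_ineq4[of "Rs q z" "Rs q z - Rs q w"] by simp
  also have "norm (Rs q z - Rs q w) \<le> cmod (z - w) * (norm (Rs q z) * norm q * norm (Rs q w))"
    by (rule Rs_norm_diff[OF qn])
  also have "\<dots> = (cmod (w - z) * norm (Rs q z) * norm q) * norm (Rs q w)"
    by (simp add: norm_minus_commute mult_ac)
  also have "\<dots> \<le> 1/2 * norm (Rs q w)" by (intro mult_right_mono h) simp
  finally show ?thesis by simp
qed

lemma Rs_cont:
  fixes q :: "'a::complex_banach_algebra_1"
  assumes qn: "quasinilpotent q"
  shows "isCont (Rs q) z"
  unfolding isCont_def LIM_eq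
proof (intro allI impI)
  fix r :: real assume r: "r > 0"
  define c where "c = norm (Rs q z) + 1"
  define d where "d = norm q + 1"
  have c0: "c > 0" "c \<ge> 1" unfolding c_def using norm_ge_zero[of "Rs q z"] by linarith+
  have d0: "d > 0" "d \<ge> 1" "norm q \<le> d" unfolding d_def using norm_ge_zero[of q] by linarith+
  define s where "s = min (1 / (2 * c * d)) (r / (4 * c * c * d))"
  have s0: "s > 0" unfolding s_def using c0 d0 r by simp
  show "\<exists>s>0. \<forall>x. x \<noteq> z \<and> norm (x - z) < s \<longrightarrow> norm (Rs q x - Rs q z) < r"
  proof (intro exI[of _ s] conjI allI impI s0)
    fix w assume w: "w \<noteq> z \<and> norm (w - z) < s"
    have h1: "cmod (w - z) * norm (Rs q z) * norm q \<le> 1/2"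
    proof -
      have "cmod (w - z) * norm (Rs q z) * norm q \<le> s * c * d"
        using w c_def d0 s0 c0 by (intro mult_mono) auto
      also have "\<dots> \<le> (1 / (2 * c * d)) * c * d" unfolding s_def using c0 d0
        by (intro mult_right_mono) auto
      also have "\<dots> = 1/2" using c0 d0 by simp
      finally show ?thesis .
    qed
    have bw: "norm (Rs q w) \<le> 2 * c" using Rs_local[OF qn h1] c_def by simp
    have "norm (Rs q w - Rs q z) \<le> cmod (w - z) * (norm (Rs q w) * norm q * norm (Rs q z))"
      by (rule Rs_norm_diff[OF qn])
    also have "\<dots> \<le> cmod (w - z) * ((2 * c) * d * c)"
      using bw d0 c_def by (intro mult_left_mono mult_mono) auto
    also have "\<dots> < s * (2 * c * d * c)"
    proof -
      have "cmod (w - z) < s" using w by simp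
      then show ?thesis using c0 d0 by (simp add: mult_strict_right_mono mult_ac)
    qed
    also have "\<dots> \<le> (r / (4 * c * c * d)) * (2 * c * d * c)" unfolding s_def using c0 d0
      by (intro mult_right_mono) auto
    also have "\<dots> = r / 2" using c0 d0 by (simp add: field_simps)
    also have "\<dots> < r" using r by simp
    finally show "norm (Rs q w - Rs q z) < r" .
  qed
qed

lemma Rs_bounded:
  fixes q :: "'a::complex_banach_algebra_1"
  assumes qn: "quasinilpotent q"
  shows "\<exists>M>0. \<forall>z. cmod z \<le> \<rho> \<longrightarrow> norm (Rs q z) \<le> M"
proof -
  have "continuous_on (cball 0 \<rho>) (Rs q)"
    by (rule continuous_at_imp_continuous_on) (use Rs_cont[OF qn] in blast)
  then have "compact (Rs q ` cball 0 \<rho>)" by (rule compact_continuous_image) simp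
  then have "bounded (Rs q ` cball 0 \<rho>)" by (rule compact_imp_bounded)
  then obtain M where "M > 0" "\<forall>y\<in>Rs q ` cball 0 \<rho>. norm y \<le> M" unfolding bounded_pos by blast
  then show ?thesis by (intro exI[of _ M]) auto
qed

lemma Rs_lip:
  fixes q :: "'a::complex_banach_algebra_1"
  assumes qn: "quasinilpotent q" and M: "\<forall>z. cmod z \<le> \<rho> \<longrightarrow> norm (Rs q z) \<le> M"
    and z: "cmod z \<le> \<rho>" and w: "cmod w \<le> \<rho>"
  shows "norm (Rs q z - Rs q w) \<le> cmod (z - w) * (M * M * norm q)"
proof -
  have "norm (Rs q z - Rs q w) \<le> cmod (z - w) * (norm (Rs q z) * norm q * norm (Rs q w))"
    by (rule Rs_norm_diff[OF qn])
  also have "\<dots> \<le> cmod (z - w) * (M * norm q * M)"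
  proof -
    have M0: "M \<ge> 0" using M z by (meson norm_ge_zero order.trans)
    show ?thesis using M z w M0 by (intro mult_left_mono mult_mono) auto
  qed
  finally show ?thesis by (simp add: mult_ac)
qed

definition omg :: "nat \<Rightarrow> complex" where "omg n = cis (2 * pi / real n)"

lemma omg_pow_n: "n > 0 \<Longrightarrow> omg n ^ n = 1"
  unfolding omg_def Complex.DeMoivre by simp

lemma omg_norm: "cmod (omg n ^ j) = 1"
  unfolding omg_def by (simp add: norm_power)

lemma omg_pow_ne1:
  assumes n: "n > 0" and m: "0 < m" "m < n"
  shows "omg n ^ m \<noteq> 1"
proof
  assume h: "omg n ^ m = 1"
  have inj: "inj_on (\<lambda>k. cis (2 * pi * real k / real n)) {..<n}"
    using Complex.bij_betw_roots_unity[OF n] by (rule bij_betw_imp_inj_on)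
  have "cis (2 * pi * real m / real n) = cis (2 * pi * real 0 / real n)"
    using h unfolding omg_def Complex.DeMoivre by (simp add: field_simps)
  from inj_onD[OF inj this] m n show False by simp
qed

lemma omg_sum:
  assumes n: "n > 0" and m: "m < n"
  shows "(\<Sum>j<n. (omg n ^ j)^m) = (if m = 0 then of_nat n else 0)"
proof (cases "m = 0")
  case True then show ?thesis by simp
next
  case False
  define x where "x = omg n ^ m"
  have x1: "x \<noteq> 1" unfolding x_def using omg_pow_ne1[OF n _ m] False by simp
  have "(\<Sum>j<n. (omg n ^ j)^m) = (\<Sum>j<n. x^j)"
    unfolding x_def by (simp add: power_mult[symmetric] mult.commute)
  also have "\<dots> = (x^n - 1) / (x - 1)" by (rule geometric_sum[OF x1])
  also have "x^n = 1" unfolding x_def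
    by (simp add: power_mult[symmetric] mult.commute[of m n]) (simp add: power_mult omg_pow_n[OF n])
  finally show ?thesis using False by simp
qed

definition Av :: "'a::complex_banach_algebra_1 \<Rightarrow> nat \<Rightarrow> complex \<Rightarrow> 'a" where
  "Av q n z = scaleC (1 / of_nat n) (\<Sum>j<n. Rs q (omg n ^ j * z))"

lemma geo_one_minus: "(1 - (X::'a::ring_1)) * (\<Sum>i<n. X^i) = 1 - X^n"
  using geo_ring[of X n] by (simp add: algebra_simps)

lemma Av_left_inv:
  fixes q :: "'a::complex_banach_algebra_1"
  assumes qn: "quasinilpotent q" and n: "n > 0"
  shows "Av q n z * (1 - scaleC (z^n) (q^n)) = 1"
proof -
  define Y where "Y = 1 - scaleC (z^n) (q^n)"
  define S where "S j = (\<Sum>m<n. scaleC ((omg n ^ j * z)^m) (q^m))" for j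
  have RS: "Rs q (omg n ^ j * z) * Y = S j" for j
  proof -
    define w where "w = omg n ^ j * z"
    have wn: "w^n = z^n" unfolding w_def
      by (simp add: power_mult_distrib power_mult[symmetric] mult.commute[of j n])
        (simp add: power_mult omg_pow_n[OF n])
    have "(1 - scaleC w q) * S j = 1 - (scaleC w q)^n"
      unfolding S_def w_def[symmetric] scaleC_pow[symmetric] by (rule geo_one_minus)
    also have "\<dots> = Y" unfolding Y_def scaleC_pow wn ..
    finally have "(1 - scaleC w q) * S j = Y" .
    then have "Rs q w * Y = (Rs q w * (1 - scaleC w q)) * S j" by (simp add: mult.assoc)
    also have "\<dots> = S j" using Rs_inv(2)[OF qn] by simp
    finally show ?thesis unfolding w_def .
  qed
  have sumS: "(\<Sum>j<n. S j) = of_nat n"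
  proof -
    have "(\<Sum>j<n. S j) = (\<Sum>m<n. \<Sum>j<n. scaleC ((omg n ^ j)^m * z^m) (q^m))"
      unfolding S_def by (subst sum.swap) (simp add: power_mult_distrib)
    also have "\<dots> = (\<Sum>m<n. scaleC ((\<Sum>j<n. (omg n ^ j)^m) * z^m) (q^m))"
      by (simp add: scaleC_sum_left sum_distrib_right)
    also have "\<dots> = (\<Sum>m<n. if m = 0 then of_nat n else 0)"
      by (intro sum.cong refl) (simp add: omg_sum[OF n] scaleC_of_nat1)
    also have "\<dots> = of_nat n" using n by (simp add: sum.delta')
    finally show ?thesis .
  qed
  have "Av q n z * Y = scaleC (1 / of_nat n) ((\<Sum>j<n. Rs q (omg n ^ j * z)) * Y)"
    unfolding Av_def by (simp add: mult_scaleC_left)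
  also have "(\<Sum>j<n. Rs q (omg n ^ j * z)) * Y = (\<Sum>j<n. S j)"
    unfolding sum_distrib_right RS ..
  also have "scaleC (1 / of_nat n) (\<Sum>j<n. S j) = 1"
    unfolding sumS scaleC_of_nat1[symmetric] scaleC_scaleC using n by (simp add: scaleC_one)
  finally show ?thesis unfolding Y_def .
qed

lemma Av_lip:
  fixes q :: "'a::complex_banach_algebra_1"
  assumes qn: "quasinilpotent q" and M: "\<forall>z. cmod z \<le> \<rho> \<longrightarrow> norm (Rs q z) \<le> M"
    and n: "n > 0" and z: "cmod z \<le> \<rho>" and w: "cmod w \<le> \<rho>"
  shows "norm (Av q n z - Av q n w) \<le> cmod (z - w) * (M * M * norm q)"
proof -
  have "Av q n z - Av q n w = scaleC (1 / of_nat n) (\<Sum>j<n. Rs q (omg n ^ j * z) - Rs q (omg n ^ j * w))"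
    unfolding Av_def by (simp add: scaleC_diff_right sum_subtractf)
  then have "norm (Av q n z - Av q n w) = (1 / real n) * norm (\<Sum>j<n. Rs q (omg n ^ j * z) - Rs q (omg n ^ j * w))"
    by (simp add: norm_scaleC norm_divide)
  also have "\<dots> \<le> (1 / real n) * (\<Sum>j<n. cmod (z - w) * (M * M * norm q))"
  proof (intro mult_left_mono order.trans[OF norm_sum] sum_mono)
    fix j assume "j \<in> {..<n}"
    have a: "cmod (omg n ^ j * z) \<le> \<rho>" "cmod (omg n ^ j * w) \<le> \<rho>"
      using z w by (simp_all add: norm_mult omg_norm)
    have "cmod (omg n ^ j * z - omg n ^ j * w) = cmod (z - w)"
      by (simp add: right_diff_distrib[symmetric] norm_mult omg_norm)
    then show "norm (Rs q (omg n ^ j * z) - Rs q (omg n ^ j * w)) \<le> cmod (z - w) * (M * M * norm q)"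
      using Rs_lip[OF qn M a] by simp
  qed simp
  also have "\<dots> = cmod (z - w) * (M * M * norm q)" using n by simp
  finally show ?thesis .
qed

lemma inv_est1:
  fixes A V :: "'a::real_normed_algebra_1"
  assumes AV: "A * (1 - V) = 1" and V: "norm V \<le> 1/8"
  shows "norm (A - 1) \<le> 1/4"
proof -
  have A1: "A - 1 = A * V" using AV by (simp add: algebra_simps)
  have "norm A \<le> norm (1::'a) + norm (A - 1)" using norm_triangle_ineq[of 1 "A - 1"] by simp
  also have "norm (A - 1) \<le> norm A * norm V" unfolding A1 by (rule norm_mult_ineq)
  also have "\<dots> \<le> norm A * (1/8)" by (intro mult_left_mono V) simp
  finally have nA: "norm A \<le> 8/7" by simp
  have "norm (A - 1) \<le> norm A * norm V" unfolding A1 by (rule norm_mult_ineq)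
  also have "\<dots> \<le> (8/7) * (1/8)" by (intro mult_mono nA V) auto
  finally show ?thesis by simp
qed

lemma inv_est2:
  fixes A Y :: "'a::real_normed_algebra_1"
  assumes AY: "A * Y = 1" and D: "norm (A - 1) \<le> 1/2"
  shows "norm (1 - Y) \<le> 1"
proof -
  have Y1: "1 - Y = (A - 1) * Y" using AY by (simp add: algebra_simps)
  have "norm Y \<le> norm (1::'a) + norm (1 - Y)" using norm_triangle_ineq4[of 1 "1 - Y"] by simp
  also have "norm (1 - Y) \<le> norm (A - 1) * norm Y" unfolding Y1 by (rule norm_mult_ineq)
  also have "\<dots> \<le> 1/2 * norm Y" by (intro mult_right_mono D) simp
  finally have nY: "norm Y \<le> 2" by simp
  have "norm (1 - Y) \<le> norm (A - 1) * norm Y" unfolding Y1 by (rule norm_mult_ineq)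
  also have "\<dots> \<le> 1/2 * 2" by (intro mult_mono D nY) auto
  finally show ?thesis by simp
qed

lemma qnil_bounded:
  fixes q :: "'a::complex_banach_algebra_1"
  assumes qn: "quasinilpotent q" and s0: "s0 > 0"
  shows "\<exists>K. \<forall>m. s0^m * norm (q^m) \<le> K"
proof -
  define \<rho> where "\<rho> = s0 + 1"
  have \<rho>0: "\<rho> > 0" unfolding \<rho>_def using s0 by simp
  obtain M where M0: "M > 0" and M: "\<forall>z. cmod z \<le> \<rho> \<longrightarrow> norm (Rs q z) \<le> M"
    using Rs_bounded[OF qn] by blast
  define L where "L = M * M * norm q"
  have L0: "L \<ge> 0" unfolding L_def using M0 by simp
  define \<delta> where "\<delta> = 1 / (4 * (L + 1))"
  have \<delta>0: "\<delta> > 0" unfolding \<delta>_def using L0 by simp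
  have L\<delta>: "L * \<delta> \<le> 1/4" unfolding \<delta>_def using L0 by (simp add: field_simps)
  define Good where "Good r \<longleftrightarrow> (\<forall>s. 0 \<le> s \<and> s < r \<longrightarrow> (\<exists>K. \<forall>m. s^m * norm (q^m) \<le> K))" for r
  have mono: "Good r' " if "Good r" "r' \<le> r" for r r'
    using that unfolding Good_def by auto
  define r0 where "r0 = 1 / (norm q + 1)"
  have r00: "r0 > 0" unfolding r0_def by (simp add: add_nonneg_pos)
  have base: "Good r0" unfolding Good_def
  proof (intro allI impI exI[of _ 1])
    fix s :: real and m assume s: "0 \<le> s \<and> s < r0"
    have sq: "s * norm q \<le> 1"
    proof -
      have "s * norm q \<le> r0 * norm q" using s by (intro mult_right_mono) auto
      also have "\<dots> \<le> 1"
      proof -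
        have pq: "norm q + 1 > 0" using norm_ge_zero[of q] by linarith
        then show ?thesis unfolding r0_def by (simp add: field_simps)
      qed
      finally show ?thesis .
    qed
    have "s^m * norm (q^m) \<le> s^m * norm q ^ m" using s by (intro mult_left_mono norm_power_ineq) auto
    also have "\<dots> = (s * norm q)^m" by (simp add: power_mult_distrib)
    also have "\<dots> \<le> 1" using sq s by (intro power_le_one) auto
    finally show "s^m * norm (q^m) \<le> 1" .
  qed
  have step: "Good (min \<rho> (r + \<delta>))" if r0': "r > 0" and g: "Good r" for r
    unfolding Good_def
  proof (intro allI impI)
    fix s :: real assume s: "0 \<le> s \<and> s < min \<rho> (r + \<delta>)"
    define s' where "s' = max 0 (s - \<delta>)"
    have s'0: "0 \<le> s'" "s' < r" "s - s' \<le> \<delta>" "s' \<le> s"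
      unfolding s'_def using s r0' \<delta>0 by auto
    define s'' where "s'' = (s' + r) / 2"
    have s''0: "s' < s''" "s'' < r" "0 < s''" unfolding s''_def using s'0 by auto
    obtain K'' where K'': "\<And>m. s''^m * norm (q^m) \<le> K''" using g s''0 unfolding Good_def by force
    have ev1: "eventually (\<lambda>m. s'^m * norm (q^m) \<le> 1/8) sequentially"
    proof -
      have "(\<lambda>m. K'' * (s' / s'')^m) \<longlonglongrightarrow> K'' * 0"
        by (intro tendsto_mult tendsto_const LIMSEQ_power_zero) (use s'0 s''0 in auto)
      then have "eventually (\<lambda>m. K'' * (s' / s'')^m < 1/8) sequentially"
        by (intro order_tendstoD) auto
      then show ?thesis
      proof (rule eventually_mono)
        fix m assume h: "K'' * (s' / s'')^m < 1/8"
        have "s'^m * norm (q^m) = (s' / s'')^m * (s''^m * norm (q^m))"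
          using s''0 by (simp add: power_divide)
        also have "\<dots> \<le> (s' / s'')^m * K''" using s'0 s''0 K'' by (intro mult_left_mono) auto
        finally show "s'^m * norm (q^m) \<le> 1/8" using h by (simp add: mult.commute)
      qed
    qed
    have ev: "eventually (\<lambda>m. s^m * norm (q^m) \<le> 1) sequentially"
      using ev1 eventually_gt_at_top[of 0]
    proof (eventually_elim)
      case (elim m)
      then have m: "m > 0" and sm: "s'^m * norm (q^m) \<le> 1/8" by auto
      define z' where "z' = complex_of_real s'"
      define z where "z = complex_of_real s"
      have nz: "norm (scaleC (z'^m) (q^m)) = s'^m * norm (q^m)"
        unfolding z'_def using s'0 by (simp add: norm_scaleC norm_power)
      have a1: "norm (Av q m z' - 1) \<le> 1/4"
        by (rule inv_est1[OF Av_left_inv[OF qn m]]) (use nz sm in simp)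
      have cz: "cmod z \<le> \<rho>" "cmod z' \<le> \<rho>" unfolding z_def z'_def using s s'0 by auto
      have "norm (Av q m z - Av q m z') \<le> cmod (z - z') * L"
        unfolding L_def by (rule Av_lip[OF qn M m cz])
      also have "cmod (z - z') = s - s'" unfolding z_def z'_def using s'0
        by (simp flip: of_real_diff)
      also have "(s - s') * L \<le> \<delta> * L" using s'0 L0 by (intro mult_right_mono) auto
      finally have a2: "norm (Av q m z - Av q m z') \<le> 1/4" using L\<delta> by (simp add: mult.commute)
      have "norm (Av q m z - 1) \<le> norm (Av q m z - Av q m z') + norm (Av q m z' - 1)"
        using norm_triangle_ineq[of "Av q m z - Av q m z'" "Av q m z' - 1"] by simp
      also have "\<dots> \<le> 1/2" using a1 a2 by simp
      finally have "norm (1 - (1 - scaleC (z^m) (q^m))) \<le> 1"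
        by (intro inv_est2[OF Av_left_inv[OF qn m]])
      then show ?case unfolding z_def using s by (simp add: norm_scaleC norm_power)
    qed
    then obtain N where N: "\<And>m. m \<ge> N \<Longrightarrow> s^m * norm (q^m) \<le> 1"
      unfolding eventually_sequentially by blast
    define K where "K = 1 + (\<Sum>m<N. s^m * norm (q^m))"
    show "\<exists>K. \<forall>m. s^m * norm (q^m) \<le> K"
    proof (intro exI[of _ K] allI)
      fix m
      have nn: "\<And>i. 0 \<le> s^i * norm (q^i)" using s by simp
      show "s^m * norm (q^m) \<le> K"
      proof (cases "m < N")
        case True
        have "s^m * norm (q^m) \<le> (\<Sum>m<N. s^m * norm (q^m))"
          by (rule member_le_sum) (use True nn in auto)
        then show ?thesis unfolding K_def by simp
      next
        case False
        then have "s^m * norm (q^m) \<le> 1" using N by simp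
        moreover have "0 \<le> (\<Sum>m<N. s^m * norm (q^m))" using nn by (simp add: sum_nonneg)
        ultimately show ?thesis unfolding K_def by simp
      qed
    qed
  qed
  have ind: "Good (min \<rho> (r0 + real j * \<delta>))" for j
  proof (induct j)
    case 0 then show ?case using mono[OF base] by simp
  next
    case (Suc j)
    have "real j * \<delta> \<ge> 0" using \<delta>0 by simp
    then have pos: "min \<rho> (r0 + real j * \<delta>) > 0" using \<rho>0 r00 by simp
    have "Good (min \<rho> (min \<rho> (r0 + real j * \<delta>) + \<delta>))" by (rule step[OF pos Suc])
    moreover have "min \<rho> (r0 + real (Suc j) * \<delta>) \<le> min \<rho> (min \<rho> (r0 + real j * \<delta>) + \<delta>)"
      using \<delta>0 by (auto simp: algebra_simps)
    ultimately show ?case by (rule mono)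
  qed
  obtain j where j: "\<rho> < real j * \<delta>" using ex_less_of_nat_mult[OF \<delta>0] by blast
  have "min \<rho> (r0 + real j * \<delta>) = \<rho>" using j r00 by simp
  then have "Good \<rho>" using ind[of j] by simp
  then show ?thesis unfolding Good_def \<rho>_def using s0 by auto
qed

lemma quasinil_nq:
  fixes q :: "'a::complex_banach_algebra_1"
  assumes qn: "quasinilpotent q"
  shows "nq q"
  unfolding nq_def
proof (intro allI impI)
  fix \<epsilon> :: real assume e: "\<epsilon> > 0"
  obtain K where K: "\<And>m. (1/\<epsilon>)^m * norm (q^m) \<le> K" using qnil_bounded[OF qn, of "1/\<epsilon>"] e by auto
  show "\<exists>C. \<forall>n. norm (q^n) \<le> C * \<epsilon>^n"
  proof (intro exI[of _ K] allI)
    fix n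
    have "norm (q^n) = \<epsilon>^n * ((1/\<epsilon>)^n * norm (q^n))" using e by (simp add: power_divide)
    also have "\<dots> \<le> \<epsilon>^n * K" using e K by (intro mult_left_mono) auto
    finally show "norm (q^n) \<le> K * \<epsilon>^n" by (simp add: mult.commute)
  qed
qed

lemma nq_pow: "nq q \<Longrightarrow> n > 0 \<Longrightarrow> nq (q^n)"
proof -
  assume q: "nq q" and n: "n > 0"
  have "q^n = q^(n-1) * q" by (rule power_minus_mult[OF n, symmetric])
  moreover have "nq (q^(n-1) * q)" by (rule nq_multl[OF q]) (intro commute_intros)
  ultimately show ?thesis by simp
qed

lemma GD_gpiH:
  fixes a x :: "'a::complex_banach_algebra_1"
  assumes g: "GD a x"
  shows "is_gpiH_inverse a x"
proof -
  define e where "e = a * x"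
  have xax: "x * a * x = x" and c: "a * x = x * a" using g unfolding GD_def by auto
  obtain n where n: "n > 0" "nq (a^n - e)" using g unfolding GD_def e_def by blast
  have ee: "e * e = e" unfolding e_def by (rule GD_basic(1)[OF g])
  have ce: "commute a e" unfolding e_def by (rule GD_basic(5)[OF g])
  have eq: "a - a^(n+2) * x = a * (1 - e) - a * ((a^n - e) * e)"
  proof -
    have h: "a^(n+2) = a * a^n * a" by (simp add: mult.assoc power_commutes)
    have "a^(n+2) * x = a * a^n * e" unfolding e_def h by (simp add: mult.assoc)
    moreover have "a * ((a^n - e) * e) = a * a^n * e - a * e"
    proof -
      have "a * ((a^n - e) * e) = a * (a^n * e) - a * (e * e)" by (simp add: algebra_simps)
      then show ?thesis using ee by (simp add: mult.assoc)
    qed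
    ultimately show ?thesis by (simp add: algebra_simps)
  qed
  have n1: "nq (a * (1 - e))" unfolding e_def by (rule GD_nq_ap[OF g])
  have n2: "nq ((a^n - e) * e)" by (rule nq_multr[OF n(2)]) (use ce commute_sym[OF ce] in \<open>intro commute_intros\<close>)
  have n3: "nq (a * ((a^n - e) * e))" by (rule nq_multl[OF n2]) (use ce commute_sym[OF ce] in \<open>intro commute_intros\<close>)
  have "nq (a - a^(n+2) * x)" unfolding eq
    by (rule nq_diff[OF n1 n3]) (use ce commute_sym[OF ce] in \<open>intro commute_intros\<close>)
  then have "quasinilpotent (a - a^(n+2) * x)" by (rule nq_quasinil)
  then show ?thesis unfolding is_gpiH_inverse_def using xax c n(1) by blast
qed

lemma gpiH_GD:
  fixes a x :: "'a::complex_banach_algebra_1"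
  assumes g: "is_gpiH_inverse a x"
  shows "GD a x"
proof -
  define e where "e = a * x"
  have xax: "x * a * x = x" and c: "a * x = x * a" using g unfolding is_gpiH_inverse_def by auto
  obtain n where n: "n > 0" "quasinilpotent (a - a^(n+2) * x)" using g unfolding is_gpiH_inverse_def by blast
  define q where "q = a - a^(n+2) * x"
  have nq: "nq q" unfolding q_def by (rule quasinil_nq[OF n(2)])
  have ee: "e * e = e" unfolding e_def using xax by (simp add: mult.assoc)
  have xe: "x * e = x" unfolding e_def using xax by (simp add: mult.assoc)
  have ex: "e * x = x" unfolding e_def using xax c by (simp add: mult.assoc)
  have xa: "x * a = e" unfolding e_def using c by simp
  have cax: "commute a x" using c unfolding commute_def .
  have ce: "commute a e" unfolding e_def using cax by (intro commute_intros)
  have cxe: "commute x e" unfolding e_def using commute_sym[OF cax] by (intro commute_intros)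
  have cq1: "commute e q"
    unfolding q_def using ce cxe commute_sym[OF ce] commute_sym[OF cxe] by (intro commute_intros)
  have cq2: "commute x q"
    unfolding q_def using cax commute_sym[OF cax] by (intro commute_intros)
  have cq3: "commute a q"
    unfolding q_def using cax by (intro commute_intros)
  note cq = cq1 cq2 cq3
  have h2: "a^(n+2) = a^(n+1) * a" by (simp add: power_commutes mult.assoc)
  have apn: "a^(n+2) * x = a^(n+1) * e" unfolding e_def h2 by (simp only: mult.assoc)
  have qp: "q * (1 - e) = a * (1 - e)"
  proof -
    have "x * (1 - e) = 0" using xe by (simp add: algebra_simps)
    then show ?thesis unfolding q_def by (simp add: algebra_simps mult.assoc)
  qed
  have nap: "nq (a * (1 - e))" unfolding qp[symmetric]
    by (rule nq_multr[OF nq]) (use cq in \<open>intro commute_intros\<close>)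
  have xqe: "x * (q * e) = e - a^n * e"
  proof -
    have "x * (q * e) = x * a * e - x * a^(n+1) * e * e" unfolding q_def apn by (simp add: algebra_simps mult.assoc)
    also have "x * a^(n+1) = e * a^n" using xa by (simp add: mult.assoc[symmetric])
    also have "e * a^n = a^n * e" using commuteD[OF commute_powr[OF commute_sym[OF ce]]] by simp
    finally show ?thesis using xa ee by (simp add: mult.assoc)
  qed
  have nqe: "nq (q * e)" by (rule nq_multr[OF nq cq1])
  have n2: "nq (e - a^n * e)" unfolding xqe[symmetric]
    by (rule nq_multl[OF nqe]) (use cq2 cxe in \<open>intro commute_intros\<close>)
  have pw: "(a * (1 - e))^n = a^n * (1 - e)"
  proof -
    have "commute a (1 - e)" using ce by (intro commute_intros)
    from mult_power_commute[OF this, of n] show ?thesis using idem_pow[OF idem_compl[OF ee] n(1)] by simp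
  qed
  have n1: "nq (a^n * (1 - e))" unfolding pw[symmetric] by (rule nq_pow[OF nap n(1)])
  have "nq (a^n * (1 - e) - (e - a^n * e))"
    by (rule nq_diff[OF n1 n2]) (use ce commute_sym[OF ce] in \<open>intro commute_intros\<close>)
  moreover have "a^n * (1 - e) - (e - a^n * e) = a^n - e" by (simp add: algebra_simps)
  ultimately have "nq (a^n - a * x)" unfolding e_def by simp
  then show ?thesis unfolding GD_def using xax c n(1) by blast
qed

lemma gpiH_iff_GD: "is_gpiH_inverse a x \<longleftrightarrow> GD a (x::'a::complex_banach_algebra_1)"
  using GD_gpiH gpiH_GD by blast

lemma gpiH_invertible_GP: "gpiH_invertible (a::'a::complex_banach_algebra_1) \<longleftrightarrow> GP a"
  unfolding gpiH_invertible_def gpiH_iff_GD using GD_GP GP_GD by blast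

lemma gpiH_inv_eq: "GD a x \<Longrightarrow> gpiH_inv (a::'a::complex_banach_algebra_1) = x"
  unfolding gpiH_inv_def gpiH_iff_GD using GD_unique by blast

lemma decomp:
  fixes a b x :: "'a::{real_normed_algebra_1,banach}"
  assumes g: "GD a x" and W: "WC k a b"
  shows "(a * x) * (a * b - b * a) = 0" "x * b * a = (a * x) * b" "(a * x) * b * (1 - a * x) = 0"
proof -
  define e where "e = a * x"
  have ee: "e * e = e" unfolding e_def by (rule GD_basic(1)[OF g])
  have xe: "x * e = x" unfolding e_def by (rule GD_basic(2)[OF g])
  have cax: "commute a x" by (rule GD_basic(4)[OF g])
  have xa: "x * a = e" unfolding e_def using GD_basic(7)[OF g] .
  have akc: "a^k * (a * b - b * a) = 0"
  proof -
    have "wd a b (replicate k True @ replicate 0 False) * a * b = wd a b (replicate k True @ replicate 0 False) * b * a"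
      using W unfolding WC_def by simp
    then show ?thesis unfolding wd_rep by (simp add: algebra_simps mult.assoc)
  qed
  have xk: "x = x^Suc k * a^k"
  proof -
    have "x^Suc k * a^k = x * (x * a)^k"
      using mult_power_commute[OF commute_sym[OF cax], of k] by (simp add: mult.assoc)
    also have "\<dots> = x"
    proof (cases k)
      case 0 then show ?thesis by simp
    next
      case (Suc j)
      then show ?thesis unfolding xa using idem_pow[OF ee, of k] xe by simp
    qed
    finally show ?thesis by simp
  qed
  have xc: "x * (a * b - b * a) = 0"
  proof -
    have "x * (a * b - b * a) = x^Suc k * (a^k * (a * b - b * a))"
      by (subst xk) (simp add: mult.assoc)
    then show ?thesis using akc by simp
  qed
  show "(a * x) * (a * b - b * a) = 0" using xc by (simp add: mult.assoc)
  have xba: "x * b * a = e * b"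
  proof -
    have "x * a * b = x * b * a" using xc by (simp add: algebra_simps mult.assoc)
    then show ?thesis unfolding xa by simp
  qed
  then show "x * b * a = (a * x) * b" unfolding e_def .
  have xj: "e * b = x^Suc j * b * a^Suc j" for j
  proof (induct j)
    case 0 then show ?case using xba by simp
  next
    case (Suc j)
    have h1: "x^Suc (Suc j) = x^Suc j * x" by (rule power_Suc2)
    have h2: "a^Suc (Suc j) = a * a^Suc j" by (rule power_Suc)
    have "x^Suc (Suc j) * b * a^Suc (Suc j) = x^Suc j * (x * b * a) * a^Suc j"
      unfolding h1 h2 by (simp only: mult.assoc)
    also have "\<dots> = (x^Suc j * e) * b * a^Suc j" unfolding xba by (simp only: mult.assoc)
    also have "x^Suc j * e = x^Suc j" by (simp only: power_Suc2 mult.assoc xe)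
    finally show ?case using Suc by simp
  qed
  have w: "nq (a * (1 - e))" unfolding e_def by (rule GD_nq_ap[OF g])
  have ce: "commute a e" unfolding e_def by (rule GD_basic(5)[OF g])
  have pw: "(a * (1 - e))^Suc m = a^Suc m * (1 - e)" for m
  proof -
    have pf: "(1 - e)^Suc m = 1 - e" by (rule idem_pow[OF idem_compl[OF ee]]) simp
    have "commute a (1 - e)" using ce by (intro commute_intros)
    from mult_power_commute[OF this, of "Suc m"] show ?thesis unfolding pf .
  qed
  have "e * b * (1 - e) = 0"
  proof (rule nq_kill[OF w, where u=x and K="norm b"])
    fix m
    have eq: "e * b * (1 - e) = x^Suc m * b * (a * (1 - e))^Suc m"
      unfolding pw xj[of m] by (simp only: mult.assoc)
    have "norm (x^Suc m * b * (a * (1 - e))^Suc m) \<le> norm (x^Suc m) * norm b * norm ((a * (1 - e))^Suc m)"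
      by (rule norm_mult3)
    also have "\<dots> \<le> norm x ^ Suc m * norm b * norm ((a * (1 - e))^Suc m)"
      by (intro mult_right_mono norm_power_ineq) auto
    also have "\<dots> = norm b * (norm x ^ Suc m * norm ((a * (1 - e))^Suc m))" by (simp add: mult_ac)
    finally show "norm (e * b * (1 - e)) \<le> norm b * (norm x ^ Suc m * norm ((a * (1 - e))^Suc m))"
      unfolding eq .
  qed simp
  then show "(a * x) * b * (1 - a * x) = 0" unfolding e_def .
qed

lemma lowtri_word:
  fixes p a b :: "'a::ring_1"
  assumes pp: "p * p = p" and pa: "p * a * p = a * p" and pb: "p * b * p = b * p"
  shows "p * wd a b Z * p = wd a b Z * p"
proof (induct Z)
  case Nil then show ?case using pp by simp
next
  case (Cons t Z)
  define X where "X = (if t then a else b)"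
  have pX: "p * X * p = X * p" unfolding X_def using pa pb by simp
  have wc: "wd a b (t # Z) = X * wd a b Z" unfolding X_def by (simp add: wd_Cons)
  have "p * wd a b (t # Z) * p = p * X * (wd a b Z * p)" unfolding wc by (simp only: mult.assoc)
  also have "\<dots> = p * X * (p * wd a b Z * p)" using Cons by simp
  also have "\<dots> = (p * X * p) * wd a b Z * p" by (simp only: mult.assoc)
  also have "\<dots> = X * (p * wd a b Z * p)" unfolding pX by (simp only: mult.assoc)
  also have "\<dots> = X * (wd a b Z * p)" using Cons by simp
  also have "\<dots> = wd a b (t # Z) * p" unfolding wc by (simp only: mult.assoc)
  finally show ?case .
qed

lemma word_p:
  fixes p a b :: "'a::ring_1"
  assumes pp: "p * p = p" and pa: "p * a * p = a * p" and pb: "p * b * p = b * p"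
  shows "Z \<noteq> [] \<Longrightarrow> wd (a * p) (b * p) Z = wd a b Z * p"
proof (induct Z)
  case Nil then show ?case by simp
next
  case (Cons t Z)
  show ?case
  proof (cases "Z = []")
    case True then show ?thesis by (simp add: wd_Cons)
  next
    case False
    have "wd (a * p) (b * p) (t # Z) = (if t then a else b) * (p * wd a b Z * p)"
      unfolding wd_Cons Cons(1)[OF False] by (simp add: mult.assoc)
    also have "\<dots> = wd a b (t # Z) * p" unfolding lowtri_word[OF pp pa pb] wd_Cons by (simp add: mult.assoc)
    finally show ?thesis .
  qed
qed

lemma word_transfer:
  fixes e a b :: "'a::ring_1"
  assumes ee: "e * e = e" and ea: "e * a * (1 - e) = 0" and eb: "e * b * (1 - e) = 0"
    and W: "WC k a b" and k: "k > 0"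
  shows "WC k (a * (1 - e)) (b * (1 - e))"
proof -
  define p where "p = 1 - e"
  have pp: "p * p = p" unfolding p_def by (rule idem_compl[OF ee])
  have pX: "p * X * p = X * p" if "e * X * p = 0" for X
  proof -
    have "X * p = (e + p) * X * p" unfolding p_def by simp
    also have "\<dots> = e * X * p + p * X * p" by (simp add: algebra_simps)
    finally show ?thesis using that by simp
  qed
  have pa: "p * a * p = a * p" by (rule pX) (use ea in \<open>simp add: p_def\<close>)
  have pb: "p * b * p = b * p" by (rule pX) (use eb in \<open>simp add: p_def\<close>)
  show ?thesis unfolding WC_def p_def[symmetric]
  proof (intro allI impI)
    fix Z :: "bool list" assume Z: "length Z = k"
    then have Zne: "Z \<noteq> []" using k by auto
    have w: "wd a b Z * a * b = wd a b Z * b * a" using W Z unfolding WC_def by blast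
    have "wd (a * p) (b * p) Z * (a * p) * (b * p) = wd a b Z * (p * a * p) * b * p"
      unfolding word_p[OF pp pa pb Zne] by (simp add: mult.assoc)
    also have "\<dots> = wd a b Z * a * (p * b * p)" unfolding pa by (simp add: mult.assoc)
    also have "\<dots> = wd a b Z * a * b * p" unfolding pb by (simp add: mult.assoc)
    also have "\<dots> = wd a b Z * b * a * p" unfolding w ..
    also have "\<dots> = wd a b Z * b * (p * a * p)" unfolding pa by (simp add: mult.assoc)
    also have "\<dots> = wd a b Z * (p * b * p) * a * p" unfolding pb by (simp add: mult.assoc)
    also have "\<dots> = wd (a * p) (b * p) Z * (b * p) * (a * p)"
      unfolding word_p[OF pp pa pb Zne] by (simp add: mult.assoc)
    finally show "wd (a * p) (b * p) Z * (a * p) * (b * p) = wd (a * p) (b * p) Z * (b * p) * (a * p)" .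
  qed
qed

lemma core:
  fixes N B :: "'a::{real_normed_algebra_1,banach}"
  assumes N: "nq N" and B: "GP B" and W: "WC k B N" and k: "k > 0"
  shows "GP (B + N)"
proof -
  obtain y where gy: "GD B y" using GP_GD[OF B] by blast
  define f where "f = B * y"
  have ff: "f * f = f" unfolding f_def by (rule GD_basic(1)[OF gy])
  have cBf: "commute B f" unfolding f_def by (rule GD_basic(5)[OF gy])
  have fc: "f * (B * N - N * B) = 0" and fNp: "f * N * (1 - f) = 0"
    using decomp[OF gy W] unfolding f_def by auto
  have fBp: "f * B * (1 - f) = 0"
  proof -
    have fB: "f * B = B * f" using cBf unfolding commute_def by simp
    have "f * B * (1 - f) = B * (f * (1 - f))" by (simp only: fB mult.assoc)
    then show ?thesis using idem_orth[OF ff] by simp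
  qed
  define s where "s = B + N"
  have fsp: "f * s * (1 - f) = 0" unfolding s_def using fNp fBp by (simp add: algebra_simps ff)
  have fsf: "f * s * f = B * f + f * N * f"
  proof -
    have "f * B * f = B * f" using cBf ff unfolding commute_def by (metis mult.assoc)
    then show ?thesis unfolding s_def by (simp add: algebra_simps)
  qed
  have nfNf: "nq (f * N * f)" by (rule nq_corner(1)[OF ff fNp N])
  have comm1: "commute (B * f) (f * N * f)"
  proof -
    have fB: "f * B = B * f" using cBf unfolding commute_def by simp
    have fBN: "f * B * N = f * N * B" using fc by (simp add: algebra_simps mult.assoc)
    have ffx: "f * (f * x) = f * x" for x by (simp add: mult.assoc[symmetric] ff)
    have fBx: "f * (B * x) = B * (f * x)" for x by (simp add: mult.assoc[symmetric] fB)
    have "B * f * (f * N * f) = (B * f) * N * f" by (simp add: mult.assoc ffx)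
    also have "\<dots> = f * B * N * f" by (simp only: fB)
    also have "\<dots> = f * N * B * f" unfolding fBN ..
    also have "\<dots> = f * N * f * (B * f)" by (simp add: mult.assoc fBx ffx ff)
    finally show ?thesis unfolding commute_def by (simp add: mult.assoc)
  qed
  have GPBf: "GP (B * f)"
  proof -
    obtain n where n: "n > 0" "nq (B^n - f)" using gy unfolding GD_def f_def by blast
    have g: "GPn B n" using GD_GPn[OF gy] n(2) unfolding f_def by simp
    have pw: "(B * f)^n = B^n * f" using mult_power_commute[OF cBf, of n] idem_pow[OF ff n(1)] by simp
    have cf2: "commute (B^n) f" using cBf by (intro commute_intros)
    have "((B * f)^n)^2 = (B^n)^2 * f"
    proof -
      have fYx: "f * (B^n * x) = B^n * (f * x)" for x
        using commuteD[OF cf2] by (simp add: mult.assoc[symmetric])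
      show ?thesis unfolding pw power2_eq_square by (simp only: mult.assoc fYx ff)
    qed
    then have "(B * f)^n - ((B * f)^n)^2 = (B^n - (B^n)^2) * f" unfolding pw by (simp add: algebra_simps)
    moreover have "nq ((B^n - (B^n)^2) * f)"
      by (rule nq_multr) (use g cBf commute_sym[OF cBf] in \<open>simp_all add: GPn_def, intro commute_intros\<close>)
    ultimately show ?thesis unfolding GP_def GPn_def using n(1) by auto
  qed
  have GP1: "GP (f * s * f)" unfolding fsf using GP_pert[OF comm1 nfNf] GPBf by simp
  have nBp: "nq (B * (1 - f))" unfolding f_def by (rule GD_nq_ap[OF gy])
  have Np: "N * (1 - f) = (1 - f) * N * (1 - f)"
  proof -
    have "N * (1 - f) = (f + (1 - f)) * N * (1 - f)" by simp
    also have "\<dots> = (1 - f) * N * (1 - f)" using fNp by (simp only: distrib_right) simp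
    finally show ?thesis .
  qed
  have nNp: "nq (N * (1 - f))" unfolding Np by (rule nq_corner(2)[OF ff fNp N])
  have Wp: "WC k (B * (1 - f)) (N * (1 - f))" by (rule word_transfer[OF ff fBp fNp W k])
  have nps: "nq (B * (1 - f) + N * (1 - f))" by (rule nq_add_WC[OF Wp nBp nNp])
  have psp: "(1 - f) * s * (1 - f) = B * (1 - f) + N * (1 - f)"
  proof -
    have "s * (1 - f) = (f + (1 - f)) * s * (1 - f)" by simp
    also have "\<dots> = (1 - f) * s * (1 - f)" using fsp by (simp only: distrib_right) simp
    finally have eq: "s * (1 - f) = (1 - f) * s * (1 - f)" .
    show ?thesis by (subst eq[symmetric]) (simp add: s_def distrib_right)
  qed
  have GP2: "GP ((1 - f) * s * (1 - f))" unfolding psp by (rule nq_GP[OF nps])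
  have "GP s" using GP_tri[OF ff fsp] GP1 GP2 by blast
  then show ?thesis unfolding s_def .
qed

lemma GP_corner_mult:
  fixes h g e :: "'a::{real_normed_algebra_1,banach}"
  assumes hg: "commute h g" and ee: "e * e = e" and eg: "e * g = g" and he: "commute h e"
    and eg2: "commute e g" and n: "n > 0" and q: "nq (h^n - e)"
  shows "GP (h * g) \<longleftrightarrow> GP g"
proof -
  have key: "GPn (h * g) (n * m) \<longleftrightarrow> GPn g (n * m)" if m: "m > 0" for m
  proof -
    define Q1 where "Q1 = (h^n)^m - e"
    have cq: "commute e (h^n - e)" using commute_sym[OF he] by (intro commute_intros)
    obtain Q1' where Q1': "(e + (h^n - e))^m = e^m + Q1'" "nq Q1'" "commute (e^m) Q1'"
      using pow_pert[OF cq q] by blast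
    have em: "e^m = e" by (rule idem_pow[OF ee m])
    have "Q1' = Q1" unfolding Q1_def using Q1'(1) em by simp
    then have nQ1: "nq Q1" using Q1'(2) by simp
    have cQg: "commute Q1 g" unfolding Q1_def using hg eg2 by (intro commute_intros)
    define G where "G = g^(n*m)"
    have nm: "n * m > 0" using n m by simp
    have eG: "e * G = G"
    proof -
      obtain j where j: "n * m = Suc j" using nm by (cases "n*m") auto
      show ?thesis unfolding G_def j by (simp add: mult.assoc[symmetric] eg)
    qed
    have hgp: "(h * g)^(n * m) = G + Q1 * G"
    proof -
      have "(h * g)^(n * m) = h^(n * m) * G" unfolding G_def by (rule mult_power_commute[OF hg])
      also have "h^(n * m) = e + Q1" unfolding Q1_def by (simp add: power_mult)
      finally show ?thesis using eG by (simp add: algebra_simps)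
    qed
    have nQG: "nq (Q1 * G)" unfolding G_def by (rule nq_multr[OF nQ1]) (use commute_sym[OF cQg] in \<open>intro commute_intros\<close>)
    have cGQ: "commute G (Q1 * G)" unfolding G_def using commute_sym[OF cQg] by (intro commute_intros)
    show ?thesis unfolding GPn_def hgp G_def[symmetric] by (rule nq_pert0[OF cGQ nQG])
  qed
  show ?thesis
  proof
    assume "GP (h * g)"
    then obtain m where m: "m > 0" "GPn (h * g) m" unfolding GP_def by blast
    have "GPn (h * g) (m * n)" by (rule GPn_mult[OF m(2) n])
    then have "GPn g (n * m)" using key[OF m(1)] by (simp add: mult.commute)
    then show "GP g" unfolding GP_def using n m(1) by (intro exI[of _ "n*m"]) simp
  next
    assume "GP g"
    then obtain m where m: "m > 0" "GPn g m" unfolding GP_def by blast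
    have "GPn g (m * n)" by (rule GPn_mult[OF m(2) n])
    then have "GPn (h * g) (n * m)" using key[OF m(1)] by (simp add: mult.commute)
    then show "GP (h * g)" unfolding GP_def using n m(1) by (intro exI[of _ "n*m"]) simp
  qed
qed

theorem theorem3p10:
  fixes a b :: "'a::complex_banach_algebra_1" and k :: nat
  assumes "k > 0"
    and "gpiH_invertible a" and "gpiH_invertible b"
    and "\<And>\<alpha>s. length \<alpha>s = k \<Longrightarrow> set \<alpha>s \<subseteq> {a, b} \<Longrightarrow>
           prod_list \<alpha>s * a * b = prod_list \<alpha>s * b * a"
  shows "gpiH_invertible (1 + gpiH_inv a * b) \<longleftrightarrow> gpiH_invertible (a + b)"
proof -
  obtain x where gx: "GD a x"
    using assms(2) unfolding gpiH_invertible_def gpiH_iff_GD by blast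
  have inv: "gpiH_inv a = x" by (rule gpiH_inv_eq[OF gx])
  have GPb: "GP b" using assms(3) gpiH_invertible_GP by blast
  have W: "WC k a b" unfolding WC_def
  proof (intro allI impI)
    fix Z :: "bool list" assume Z: "length Z = k"
    let ?as = "map (\<lambda>t. if t then a else b) Z"
    have "prod_list ?as * a * b = prod_list ?as * b * a"
      by (rule assms(4)) (use Z in auto)
    then show "wd a b Z * a * b = wd a b Z * b * a" unfolding wd_def .
  qed
  define e where "e = a * x"
  define p where "p = 1 - e"
  have ee: "e * e = e" unfolding e_def by (rule GD_basic(1)[OF gx])
  have xe: "x * e = x" unfolding e_def by (rule GD_basic(2)[OF gx])
  have ex: "e * x = x" unfolding e_def by (rule GD_basic(3)[OF gx])
  have ce: "commute a e" unfolding e_def by (rule GD_basic(5)[OF gx])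
  have ae: "a * e = e * a" using ce unfolding commute_def .
  have pp: "p * p = p" unfolding p_def by (rule idem_compl[OF ee])
  have D: "x * b * a = e * b" "e * b * p = 0"
    using decomp[OF gx W] unfolding e_def p_def by auto
  have eap: "e * a * p = 0"
  proof -
    have "e * a * p = a * (e * p)" by (simp only: ae[symmetric] mult.assoc)
    then show ?thesis using idem_orth[OF ee] unfolding p_def by simp
  qed
  define T where "T = 1 + x * b"
  define g where "g = e + x * b * e"
  have xbp: "x * b * p = 0"
  proof -
    have "x * b * p = x * (e * b * p)" by (simp add: mult.assoc[symmetric] xe)
    then show ?thesis using D(2) by simp
  qed
  have eTp: "e * T * p = 0"
  proof -
    have "e * T * p = e * p + e * x * b * p" unfolding T_def by (simp add: algebra_simps)
    also have "\<dots> = 0" using xbp idem_orth[OF ee] unfolding p_def[symmetric] by (simp add: ex)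
    finally show ?thesis .
  qed
  have px: "p * x = 0" unfolding p_def using ex by (simp add: algebra_simps)
  have pTp: "p * T * p = p"
  proof -
    have "p * T * p = p * p + p * x * b * p" unfolding T_def by (simp add: algebra_simps)
    then show ?thesis using px pp by simp
  qed
  have eTe: "e * T * e = g"
  proof -
    have "e * T * e = e * e + e * x * b * e" unfolding T_def by (simp add: algebra_simps)
    then show ?thesis unfolding g_def using ee ex by simp
  qed
  have GPp: "GP p"
  proof -
    have "GPn p 1" unfolding GPn_def using pp by (simp add: power2_eq_square nq_zero)
    then show ?thesis unfolding GP_def by blast
  qed
  have eTp': "e * T * (1 - e) = 0" using eTp unfolding p_def .
  have step1: "GP T \<longleftrightarrow> GP g"
    using GP_tri[OF ee eTp'] pTp GPp eTe unfolding p_def by simp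
  define s where "s = a + b"
  have esp: "e * s * (1 - e) = 0"
  proof -
    have "e * s * (1 - e) = e * a * p + e * b * p" unfolding s_def p_def by (simp add: algebra_simps)
    then show ?thesis using eap D(2) by simp
  qed
  have pa: "p * a = a * p" unfolding p_def using ae by (simp add: algebra_simps)
  have pap: "p * a * p = a * p" unfolding pa using pp by (simp add: mult.assoc)
  have pbp: "p * b * p = b * p"
  proof -
    have "b * p = (e + p) * b * p" unfolding p_def by simp
    also have "\<dots> = e * b * p + p * b * p" by (simp add: algebra_simps)
    finally show ?thesis using D(2) by simp
  qed
  have psp: "p * s * p = b * p + a * p" unfolding s_def using pap pbp by (simp add: algebra_simps)
  have GPbp: "GP (b * p)"
  proof -
    have "e * b * (1 - e) = 0" using D(2) unfolding p_def .
    from GP_tri[OF ee this] GPb show ?thesis using pbp unfolding p_def by simp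
  qed
  have nap: "nq (a * p)" unfolding p_def e_def by (rule GD_nq_ap[OF gx])
  have Wp: "WC k (b * p) (a * p)"
  proof -
    have "e * a * (1 - e) = 0" "e * b * (1 - e) = 0" using eap D(2) unfolding p_def by auto
    from word_transfer[OF ee this W assms(1)] show ?thesis unfolding p_def by (rule WC_sym)
  qed
  have GPpsp: "GP (p * s * p)" unfolding psp by (rule core[OF nap GPbp Wp assms(1)])
  have step2: "GP s \<longleftrightarrow> GP (e * s * e)"
    using GP_tri[OF ee esp] GPpsp unfolding p_def by blast
  have aex: "a * e * x = e"
  proof -
    have "a * e * x = a * (e * x)" by (simp only: mult.assoc)
    also have "\<dots> = a * x" by (simp only: ex)
    finally show ?thesis unfolding e_def .
  qed
  have ese: "e * s * e = (a * e) * g"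
  proof -
    have "e * s * e = e * a * e + e * b * e" unfolding s_def by (simp add: algebra_simps)
    also have "e * a * e = a * e" by (simp only: ae[symmetric] mult.assoc ee)
    also have "(a * e) * g = a * e * e + a * e * x * b * e" unfolding g_def by (simp add: algebra_simps)
    moreover have "a * e * e = a * e" using ee by (simp add: mult.assoc)
    moreover have "a * e * x * b * e = e * b * e" using aex by simp
    ultimately show ?thesis by simp
  qed
  have cag: "commute a g"
  proof -
    have "a * (x * b * e) = e * b * e" unfolding e_def by (simp add: mult.assoc)
    moreover have "(x * b * e) * a = e * b * e"
    proof -
      have "(x * b * e) * a = x * b * a * e" using ae by (simp add: mult.assoc)
      then show ?thesis using D(1) by simp
    qed
    ultimately show ?thesis unfolding commute_def g_def using ae by (simp add: algebra_simps)
  qed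
  have eg: "e * g = g"
  proof -
    have "e * g = e * e + (e * x) * b * e" unfolding g_def by (simp add: algebra_simps)
    then show ?thesis unfolding g_def using ee ex by simp
  qed
  have ge: "g * e = g" unfolding g_def using ee by (simp add: algebra_simps mult.assoc)
  have ceg: "commute e g" unfolding commute_def using eg ge by simp
  have chg: "commute (a * e) g" using cag ceg by (intro commute_intros)
  have che: "commute (a * e) e" using ce by (intro commute_intros)
  obtain n where n: "n > 0" "nq (a^n - e)" using gx unfolding GD_def e_def by blast
  have aen: "(a * e)^n - e = (a^n - e) * e"
  proof -
    have "(a * e)^n = a^n * e" using mult_power_commute[OF ce, of n] idem_pow[OF ee n(1)] by simp
    then show ?thesis using ee by (simp add: algebra_simps)
  qed
  have nae: "nq ((a * e)^n - e)" unfolding aen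
    by (rule nq_multr[OF n(2)]) (use ce commute_sym[OF ce] in \<open>intro commute_intros\<close>)
  have step3: "GP ((a * e) * g) \<longleftrightarrow> GP g"
    by (rule GP_corner_mult[OF chg ee eg che ceg n(1) nae])
  have "GP (1 + gpiH_inv a * b) \<longleftrightarrow> GP (a + b)"
    using step1 step2 step3 ese unfolding inv T_def[symmetric] s_def[symmetric] by simp
  then show ?thesis unfolding gpiH_invertible_GP .
qed

end
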